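(* For every $\varepsilon>0$ there exist numbers $\gamma_*>0$, $\Delta_*>0$, $\delta_*>0$, $\sigma_*>0$ with the following property. Let $\Delta\in(0,\Delta_* )$ and let $\{\Omega_1,\dots,\Omega_N\}$ be any finite $\Delta$-partition of $\Omega$. Let $\Lambda_*=\{0=z_0<\dots<z_a=\gamma_*\}$ be any uniform partition of $[0,\gamma_*]$ whose step $\delta=\gamma_*/a$ satisfies $\delta\in(0,\delta_* )$. Let $\sigma\in(0,\sigma_* )$ and let $E_\sigma$ be any finite $\sigma$-net on the unit sphere $E=\{x\in\mathbb{R}^n:\|x\|=1\}$. Then $$h_q\big(\mathcal{F}_p(r),\mathcal{F}_p^{\gamma_*,\Delta,\delta,\sigma}(r)\big)\le\varepsilon.$$
   Context: Let $k,m,n\ge 1$ be integers and let $\Omega\subset\mathbb{R}^k$ be a compact set. Let $\mu$ denote Lebesgue measure. Let $p>1$, let $q$ satisfy $1/p+1/q=1$, and let $r>0$. Throughout, $\|\cdot\|$ denotes the Euclidean norm on vectors and the Euclidean (Frobenius) norm on $m\times n$ matrices. $L_p(\Omega;\mathbb{R}^n)$ is the space of Lebesgue measurable $x:\Omega\to\mathbb{R}^n$ with $\|x\|_p=(\int_\Omega\|x(s)\|^p\,ds)^{1/p}<\infty$. Set $B_p(r)=\{x\in L_p(\Omega;\mathbb{R}^n):\|x\|_p\le r\}$. For $U,V\subset L_q(\Omega;\mathbb{R}^m)$, $h_q(U,V)$ denotes the Hausdorff distance $\max\{\sup_{u\in U}\inf_{v\in V}\|u-v\|_q,\ \sup_{v\in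 V}\inf_{u\in U}\|u-v\|_q\}$. $K:\Omega\times\Omega\to\mathbb{R}^{m\times n}$ is Lebesgue measurable with $\int_\Omega\int_\Omega\|K(\xi,s)\|^q\,d\xi\,ds<\infty$. The operator is $F(x)(\xi)=\int_\Omega K(\xi,s)x(s)\,ds$ for a.e. $\xi\in\Omega$, and $\mathcal{F}_p(r)=\{F(x):x\in B_p(r)\}$. A finite $\Delta$-partition of $\Omega$ is a finite family $\{\Omega_1,\dots,\Omega_N\}$ of pairwise disjoint Lebesgue measurable subsets of $\Omega$ whose union is $\Omega$, with $\operatorname{diam}(\Omega_i)\le\Delta$ for each $i$. A finite $\sigma$-net on $E$ is a finite set $E_\sigma\subset E$ such that every point of $E$ lies within distance $\sigma$ of some point of $E_\sigma$. Given such a partition $\{\Omega_i\}$, a uniform partition $\Lambda_*$ of $[0,\gamma]$ with step $\delta$, and a finite $\sigma$-net $E_\sigma$, define $$B_p^{\gamma,\Delta,\delta,\sigma}(r)=\Big\{x:\Omega\to\mathbb{R}^n:\ x(\xi)=z_{j_i}e_{l_i}\text{ for all }\xi\in\Omega_i,\ \text{where } z_{j_i}\in\Lambda_*,\ e_{l_i}\in E_\sigma,\ \sum_{i=1}^N\mu(\Omega_i)z_{j_i}^p\le r^p\Big\}$$ and $\mathcal{F}_p^{\gamma,\Delta,\delta,\sigma}(r)=\{F(x):x\in B_p^{\gamma,\Delta,\delta,\sigma}(r)\}$. *)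

theory Defs
  imports "HOL-Analysis.Analysis"
begin

definition in_Lp :: "real \<Rightarrow> ('a::euclidean_space) set \<Rightarrow> ('a \<Rightarrow> 'b::euclidean_space) \<Rightarrow> bool" where
  "in_Lp p \<Omega> x \<longleftrightarrow> x \<in> borel_measurable (lebesgue_on \<Omega>)
     \<and> integrable (lebesgue_on \<Omega>) (\<lambda>s. norm (x s) powr p)"

definition Lp_norm :: "real \<Rightarrow> ('a::euclidean_space) set \<Rightarrow> ('a \<Rightarrow> 'b::euclidean_space) \<Rightarrow> real" where
  "Lp_norm p \<Omega> x = (integral\<^sup>L (lebesgue_on \<Omega>) (\<lambda>s. norm (x s) powr p)) powr (1 / p)"

definition Bp :: "real \<Rightarrow> ('a::euclidean_space) set \<Rightarrow> real \<Rightarrow> ('a \<Rightarrow> 'b::euclidean_space) set" where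
  "Bp p \<Omega> r = {x. in_Lp p \<Omega> x \<and> Lp_norm p \<Omega> x \<le> r}"

text \<open>Hausdorff distance in L_q (as an extended real, so that suprema are always meaningful).\<close>
definition hausdorff_Lq :: "real \<Rightarrow> ('a::euclidean_space) set \<Rightarrow> ('a \<Rightarrow> 'b::euclidean_space) set
    \<Rightarrow> ('a \<Rightarrow> 'b) set \<Rightarrow> ereal" where
  "hausdorff_Lq q \<Omega> U V = max
     (SUP u\<in>U. INF v\<in>V. ereal (Lp_norm q \<Omega> (\<lambda>s. u s - v s)))
     (SUP v\<in>V. INF u\<in>U. ereal (Lp_norm q \<Omega> (\<lambda>s. u s - v s)))"

definition intop :: "('a::euclidean_space) set \<Rightarrow> ('a \<Rightarrow> 'a \<Rightarrow> real^'n^'m) \<Rightarrow> ('a \<Rightarrow> real^'n)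
    \<Rightarrow> ('a \<Rightarrow> real^'m)" where
  "intop \<Omega> K x = (\<lambda>\<xi>. integral\<^sup>L (lebesgue_on \<Omega>) (\<lambda>s. K \<xi> s *v x s))"

definition is_Delta_partition :: "('a::euclidean_space) set \<Rightarrow> real \<Rightarrow> 'a set set \<Rightarrow> bool" where
  "is_Delta_partition \<Omega> \<Delta> P \<longleftrightarrow> finite P \<and> disjoint P \<and> \<Union>P = \<Omega>
     \<and> (\<forall>A\<in>P. A \<in> sets lebesgue \<and> diameter A \<le> \<Delta>)"

definition is_finite_net :: "real \<Rightarrow> ('a::metric_space) set \<Rightarrow> 'a set \<Rightarrow> bool" where
  "is_finite_net \<sigma> E N \<longleftrightarrow> finite N \<and> N \<subseteq> E \<and> (\<forall>x\<in>E. \<exists>e\<in>N. dist x e \<le> \<sigma>)"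

definition unif_grid :: "real \<Rightarrow> nat \<Rightarrow> real set" where
  "unif_grid \<gamma> a = (\<lambda>j. real j * (\<gamma> / real a)) ` {0..a}"

definition Bp_disc :: "real \<Rightarrow> real \<Rightarrow> ('a::euclidean_space) set set \<Rightarrow> real set
    \<Rightarrow> ('b::real_normed_vector) set \<Rightarrow> ('a \<Rightarrow> 'b) set" where
  "Bp_disc p r P Lam Es = {x. \<exists>z e. (\<forall>A\<in>P. z A \<in> Lam \<and> e A \<in> Es \<and> (\<forall>\<xi>\<in>A. x \<xi> = z A *\<^sub>R e A))
       \<and> (\<Sum>A\<in>P. measure lebesgue A * z A powr p) \<le> r powr p}"

end

theory Submission
  imports Defs
begin

lemma holder_nn:
  fixes f g :: "'a \<Rightarrow> real"
  assumes fm: "f \<in> borel_measurable M" and gm: "g \<in> borel_measurable M"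
    and f0: "\<And>x. 0 \<le> f x" and g0: "\<And>x. 0 \<le> g x"
    and p: "p > 1" and pq: "1/p + 1/q = 1"
    and A: "(\<integral>\<^sup>+x. ennreal (f x powr p) \<partial>M) \<le> ennreal A"
    and B: "(\<integral>\<^sup>+x. ennreal (g x powr q) \<partial>M) \<le> ennreal B"
    and A0: "0 \<le> A" and B0: "0 \<le> B"
  shows "(\<integral>\<^sup>+x. ennreal (f x * g x) \<partial>M) \<le> ennreal (A powr (1/p) * B powr (1/q))"
proof -
  have q: "q > 1"
  proof -
    have "1/q = 1 - 1/p" using pq by simp
    moreover have "0 < 1 - 1/p" "1 - 1/p < 1" using p by auto
    ultimately have "0 < 1/q" "1/q < 1" by auto
    then show ?thesis by (smt (verit) divide_less_eq_1 zero_less_divide_1_iff)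
  qed
  show ?thesis
  proof (cases "A = 0 \<or> B = 0")
    case True
    then show ?thesis
    proof
      assume "A = 0"
      then have "(\<integral>\<^sup>+x. ennreal (f x powr p) \<partial>M) = 0" using A by simp
      then have "AE x in M. ennreal (f x powr p) = 0"
        by (subst (asm) nn_integral_0_iff_AE) (use fm in auto)
      then have "AE x in M. ennreal (f x * g x) = 0"
        by eventually_elim (use f0 p in auto)
      then have "(\<integral>\<^sup>+x. ennreal (f x * g x) \<partial>M) = 0"
        by (simp add: nn_integral_cong_AE)
      then show ?thesis by simp
    next
      assume "B = 0"
      then have "(\<integral>\<^sup>+x. ennreal (g x powr q) \<partial>M) = 0" using B by simp
      then have "AE x in M. ennreal (g x powr q) = 0"
        by (subst (asm) nn_integral_0_iff_AE) (use gm in auto)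
      then have "AE x in M. ennreal (f x * g x) = 0"
        by eventually_elim (use g0 q in auto)
      then have "(\<integral>\<^sup>+x. ennreal (f x * g x) \<partial>M) = 0"
        by (simp add: nn_integral_cong_AE)
      then show ?thesis by simp
    qed
  next
    case False
    then have Ap: "A > 0" and Bp: "B > 0" using A0 B0 by auto
    define a where "a = A powr (1/p)"
    define b where "b = B powr (1/q)"
    have ap: "a > 0" and bp: "b > 0" using Ap Bp by (auto simp: a_def b_def)
    have apow: "a powr p = A" using Ap p by (simp add: a_def powr_powr)
    have bpow: "b powr q = B" using Bp q by (simp add: b_def powr_powr)
    have pt: "f x * g x \<le> (a*b/(p*A)) * f x powr p + (a*b/(q*B)) * g x powr q" for x
    proof -
      have "(f x / a) * (g x / b) \<le> (f x / a) powr p / p + (g x / b) powr q / q"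
        by (rule Youngs_inequality) (use p q pq f0 g0 ap bp in auto)
      also have "(f x / a) powr p = f x powr p / A"
        using f0 ap apow by (simp add: powr_divide)
      also have "(g x / b) powr q = g x powr q / B"
        using g0 bp bpow by (simp add: powr_divide)
      finally have "(f x / a) * (g x / b) \<le> f x powr p / A / p + g x powr q / B / q" .
      then have "a*b*((f x / a) * (g x / b)) \<le> a*b*(f x powr p / A / p + g x powr q / B / q)"
        using ap bp by (intro mult_left_mono) auto
      then show ?thesis using ap bp by (simp add: field_simps)
    qed
    have "(\<integral>\<^sup>+x. ennreal (f x * g x) \<partial>M) \<le>
        (\<integral>\<^sup>+x. ennreal (a*b/(p*A)) * ennreal (f x powr p) + ennreal (a*b/(q*B)) * ennreal (g x powr q) \<partial>M)"
      apply (rule nn_integral_mono)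
      using pt ap bp Ap Bp p q
      by (simp add: ennreal_mult[symmetric] ennreal_plus[symmetric] del: ennreal_plus)
    also have "\<dots> = ennreal (a*b/(p*A)) * (\<integral>\<^sup>+x. ennreal (f x powr p) \<partial>M)
        + ennreal (a*b/(q*B)) * (\<integral>\<^sup>+x. ennreal (g x powr q) \<partial>M)"
      using fm gm by (subst nn_integral_add) (auto simp: nn_integral_cmult)
    also have "\<dots> \<le> ennreal (a*b/(p*A)) * ennreal A + ennreal (a*b/(q*B)) * ennreal B"
      by (intro add_mono mult_left_mono A B) auto
    also have "\<dots> = ennreal (a*b/(p*A) * A + a*b/(q*B) * B)"
      using ap bp Ap Bp p q by (simp add: ennreal_mult[symmetric] ennreal_plus[symmetric] del: ennreal_plus)
    also have "a*b/(p*A) * A + a*b/(q*B) * B = a*b*(1/p + 1/q)"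
      using Ap Bp p q by (simp add: field_simps)
    also have "\<dots> = a * b" using pq by simp
    finally show ?thesis by (simp add: a_def b_def)
  qed
qed

lemma norm_mv: "norm (A *v x) \<le> norm (A::real^'n^'m) * norm (x::real^'n)"
proof -
  have row: "(A *v x) $ i = inner (A $ i) x" for i
    by (simp add: matrix_vector_mult_def inner_vec_def)
  have "norm (A *v x) = sqrt (\<Sum>i\<in>UNIV. (inner (A $ i) x)\<^sup>2)"
    by (simp add: norm_vec_def L2_set_def row)
  also have "\<dots> \<le> sqrt (\<Sum>i\<in>UNIV. (norm (A $ i))\<^sup>2 * (norm x)\<^sup>2)"
    apply (rule real_sqrt_le_mono, rule sum_mono)
    by (metis Cauchy_Schwarz_ineq2 abs_ge_zero power2_abs power_mono power_mult_distrib)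
  also have "\<dots> = norm A * norm x"
    by (simp add: norm_vec_def L2_set_def sum_distrib_right[symmetric] real_sqrt_mult abs_of_nonneg sum_nonneg)
  finally show ?thesis .
qed

lemma le_one_plus_powr: "0 \<le> t \<Longrightarrow> 1 \<le> p \<Longrightarrow> t \<le> 1 + t powr (p::real)"
proof (cases "t \<le> 1")
  case False
  assume "0 \<le> t" "1 \<le> p"
  then have "t powr 1 \<le> t powr p" using False by (intro powr_mono) auto
  then show ?thesis using False by simp
qed (use powr_ge_zero[of t p] in linarith)

lemma sum_powr_le: "0 \<le> a \<Longrightarrow> 0 \<le> b \<Longrightarrow> 0 < q \<Longrightarrow> (a + b) powr q \<le> 2 powr q * (a powr q + b powr (q::real))"
proof -
  assume a: "0 \<le> a" and b: "0 \<le> b" and q: "0 < q"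
  have "(a+b) powr q \<le> (2 * max a b) powr q"
    using a b q by (intro powr_mono2) auto
  also have "\<dots> = 2 powr q * max a b powr q" using a b by (simp add: powr_mult)
  also have "max a b powr q \<le> a powr q + b powr q"
    by (cases "a \<le> b") (auto simp: max_def)
  finally show ?thesis by (simp add: mult_left_mono)
qed

lemma nn_lebesgue_on_conv:
  assumes "S \<in> sets lebesgue"
  shows "nn_integral (lebesgue_on S) h = (\<integral>\<^sup>+x. h x * indicator S x \<partial>lborel)"
  using assms by (simp add: nn_integral_restrict_space nn_integral_completion)

lemma integral_le_of_nn:
  fixes h :: "'a \<Rightarrow> real"
  assumes "\<And>x. 0 \<le> h x" "(\<integral>\<^sup>+x. ennreal (h x) \<partial>M) \<le> ennreal B" "0 \<le> B"
  shows "integral\<^sup>L M h \<le> B"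
proof (cases "integrable M h")
  case True
  then have "integral\<^sup>L M h = enn2real (\<integral>\<^sup>+x. ennreal (h x) \<partial>M)"
    using assms by (intro integral_eq_nn_integral) auto
  also have "\<dots> \<le> B" using assms
    by (metis enn2real_ennreal enn2real_mono ennreal_neq_top top.not_eq_extremum)
  finally show ?thesis .
qed (use assms in \<open>simp add: not_integrable_integral_eq\<close>)

locale setting =
  fixes \<Omega> :: "(real^'k) set" and K :: "real^'k \<Rightarrow> real^'k \<Rightarrow> real^'n^'m" and p q r :: real
  assumes cpt: "compact \<Omega>" and p1: "p > 1" and pq: "1/p+1/q=1" and r0: "r > 0"
    and Kmeas: "(\<lambda>(\<xi>, s). K \<xi> s) \<in> borel_measurable (lebesgue_on (\<Omega> \<times> \<Omega>))"
    and Kint: "integrable (lebesgue_on (\<Omega> \<times> \<Omega>)) (\<lambda>(\<xi>, s). norm (K \<xi> s) powr q)"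
begin

abbreviation "M \<equiv> lebesgue_on \<Omega>"
definition "mO = measure lebesgue \<Omega>"

lemma q1: "q > 1"
proof -
  have "1/q = 1 - 1/p" using pq by simp
  moreover have "0 < 1 - 1/p" "1 - 1/p < 1" using p1 by auto
  ultimately have "0 < 1/q" "1/q < 1" by auto
  then show ?thesis by (smt (verit) divide_less_eq_1 zero_less_divide_1_iff)
qed

lemma Om_lmeas: "\<Omega> \<in> lmeasurable" using cpt by (simp add: lmeasurable_compact)
lemma Om_sets[simp]: "\<Omega> \<in> sets lebesgue" using Om_lmeas by (simp add: fmeasurableD)
lemma Om_borel[simp]: "\<Omega> \<in> sets borel" using cpt by (simp add: compact_imp_closed borel_closed)
lemma mO_nonneg: "0 \<le> mO" by (simp add: mO_def)
lemma emeasure_Om: "emeasure lebesgue \<Omega> = ennreal mO"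
  using Om_lmeas by (simp add: mO_def emeasure_eq_measure2)
lemma space_M[simp]: "space M = \<Omega>" by simp

lemma nn_const_M: "(\<integral>\<^sup>+x. ennreal c \<partial>M) = ennreal c * ennreal mO"
  by (simp add: emeasure_restrict_space emeasure_Om)

context
  fixes y assumes y: "y \<in> Bp p \<Omega> r"
begin

lemma Bp_meas: "y \<in> borel_measurable M"
  using y by (simp add: Bp_def in_Lp_def)

lemma Bp_pow_int: "integrable M (\<lambda>s. norm (y s) powr p)"
  using y by (simp add: Bp_def in_Lp_def)

lemma Bp_pow_le: "integral\<^sup>L M (\<lambda>s. norm (y s) powr p) \<le> r powr p"
proof -
  let ?I = "integral\<^sup>L M (\<lambda>s. norm (y s) powr p)"
  have I0: "0 \<le> ?I" by (intro integral_nonneg_AE) auto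
  have "?I powr (1/p) \<le> r" using y by (simp add: Bp_def Lp_norm_def)
  then have "(?I powr (1/p)) powr p \<le> r powr p"
    using p1 by (intro powr_mono2) auto
  then show ?thesis using I0 p1 by (simp add: powr_powr)
qed

lemma Bp_pow_nn: "(\<integral>\<^sup>+s. ennreal (norm (y s) powr p) \<partial>M) \<le> ennreal (r powr p)"
proof -
  have "(\<integral>\<^sup>+s. ennreal (norm (y s) powr p) \<partial>M) = ennreal (integral\<^sup>L M (\<lambda>s. norm (y s) powr p))"
    using Bp_pow_int by (intro nn_integral_eq_integral) auto
  then show ?thesis using Bp_pow_le by (simp add: ennreal_leI)
qed

lemma Bp_norm_nn: "(\<integral>\<^sup>+s. ennreal (norm (y s)) \<partial>M) \<le> ennreal (mO + r powr p)"
proof -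
  have "(\<integral>\<^sup>+s. ennreal (norm (y s)) \<partial>M) \<le> (\<integral>\<^sup>+s. ennreal 1 + ennreal (norm (y s) powr p) \<partial>M)"
  proof (intro nn_integral_mono)
    fix s
    have "ennreal (norm (y s)) \<le> ennreal (1 + norm (y s) powr p)"
      using p1 by (intro ennreal_leI le_one_plus_powr) auto
    then show "ennreal (norm (y s)) \<le> ennreal 1 + ennreal (norm (y s) powr p)"
      by (simp add: ennreal_plus)
  qed
  also have "\<dots> = (\<integral>\<^sup>+s. ennreal 1 \<partial>M) + (\<integral>\<^sup>+s. ennreal (norm (y s) powr p) \<partial>M)"
    using Bp_meas by (intro nn_integral_add) auto
  also have "\<dots> \<le> ennreal mO + ennreal (r powr p)"
    using nn_const_M[of 1] by (intro add_mono Bp_pow_nn) simp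
  finally show ?thesis using mO_nonneg by (simp add: ennreal_plus)
qed

lemma Bp_integrable: "integrable M y"
  using Bp_meas Bp_norm_nn by (intro integrableI_bounded) (auto simp: top.not_eq_extremum dest: order.strict_trans1[OF _ ennreal_less_top])

end

end

lemma part_sum:
  fixes f :: "'a set \<Rightarrow> 'b::real_vector"
  assumes "disjoint P" "A0 \<in> P" "s \<in> A0" "finite P"
  shows "(\<Sum>A\<in>P. indicator A s *\<^sub>R f A) = f A0"
proof -
  have "(\<Sum>A\<in>P. indicator A s *\<^sub>R f A) = indicator A0 s *\<^sub>R f A0 + (\<Sum>A\<in>P-{A0}. indicator A s *\<^sub>R f A)"
    by (rule sum.remove) (use assms in auto)
  also have "(\<Sum>A\<in>P-{A0}. indicator A s *\<^sub>R f A) = 0"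
  proof (intro sum.neutral ballI)
    fix A assume "A \<in> P - {A0}"
    then have "s \<notin> A" using assms by (auto dest: disjointD)
    then show "indicator A s *\<^sub>R f A = 0" by simp
  qed
  finally show ?thesis using assms by simp
qed

lemma part_sum_real:
  fixes f :: "'a set \<Rightarrow> real"
  assumes "disjoint P" "A0 \<in> P" "s \<in> A0" "finite P"
  shows "(\<Sum>A\<in>P. indicator A s * f A) = f A0"
  using part_sum[OF assms, of f] by simp

context setting begin

lemma finM: "finite_measure M"
  by (rule finite_measureI) (simp add: emeasure_restrict_space emeasure_Om)

lemma emeasure_M_fin: "emeasure M A < \<infinity>"
  using finite_measure.emeasure_finite[OF finM] by (simp add: top.not_eq_extremum)

lemma cell_sets:
  assumes "is_Delta_partition \<Omega> \<Delta> P" "A \<in> P"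
  shows "A \<in> sets M" "A \<subseteq> \<Omega>" "A \<in> sets lebesgue" "measure M A = measure lebesgue A"
proof -
  show A1: "A \<subseteq> \<Omega>" "A \<in> sets lebesgue" using assms by (auto simp: is_Delta_partition_def)
  then show "A \<in> sets M" by (simp add: sets_restrict_space_iff)
  show "measure M A = measure lebesgue A" using A1 by (simp add: measure_restrict_space)
qed

lemma cell_cover:
  assumes "is_Delta_partition \<Omega> \<Delta> P" "s \<in> \<Omega>"
  obtains A where "A \<in> P" "s \<in> A"
  using assms by (auto simp: is_Delta_partition_def)

lemma part_fin: "is_Delta_partition \<Omega> \<Delta> P \<Longrightarrow> finite P" and part_disj: "is_Delta_partition \<Omega> \<Delta> P \<Longrightarrow> disjoint P"
  by (auto simp: is_Delta_partition_def)

lemma Bp_disc_sub: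
  assumes P: "is_Delta_partition \<Omega> \<Delta> P" and Lam: "Lam \<subseteq> {0..}" and Es: "Es \<subseteq> sphere 0 1"
    and x: "x \<in> Bp_disc p r P Lam Es"
  shows "x \<in> Bp p \<Omega> r"
proof -
  obtain z e where ze: "\<And>A. A \<in> P \<Longrightarrow> z A \<in> Lam \<and> e A \<in> Es \<and> (\<forall>\<xi>\<in>A. x \<xi> = z A *\<^sub>R e A)"
    and sumle: "(\<Sum>A\<in>P. measure lebesgue A * z A powr p) \<le> r powr p"
    using x unfolding Bp_disc_def by blast
  have z0: "A \<in> P \<Longrightarrow> 0 \<le> z A" for A using ze Lam by auto
  have e1: "A \<in> P \<Longrightarrow> norm (e A) = 1" for A using ze[of A] Es by (force simp: subset_iff)
  have eq: "x s = (\<Sum>A\<in>P. indicator A s *\<^sub>R (z A *\<^sub>R e A))" if sO: "s \<in> \<Omega>" for s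
  proof -
    obtain A0 where "A0 \<in> P" "s \<in> A0" using cell_cover[OF P sO] by blast
    then show ?thesis using part_sum[OF part_disj[OF P] _ _ part_fin[OF P], of A0 s "\<lambda>A. z A *\<^sub>R e A"] ze by auto
  qed
  have pw: "norm (x s) powr p = (\<Sum>A\<in>P. indicator A s * z A powr p)" if sO: "s \<in> \<Omega>" for s
  proof -
    obtain A0 where A0: "A0 \<in> P" "s \<in> A0" using cell_cover[OF P sO] by blast
    then have "norm (x s) powr p = z A0 powr p" using ze e1 z0 by auto
    then show ?thesis using part_sum_real[OF part_disj[OF P] A0 part_fin[OF P]] by simp
  qed
  have meas: "x \<in> borel_measurable M"
  proof (rule measurable_cong[THEN iffD2])
    show "\<And>w. w \<in> space M \<Longrightarrow> x w = (\<Sum>A\<in>P. indicator A w *\<^sub>R (z A *\<^sub>R e A))"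
      using eq by simp
    show "(\<lambda>w. \<Sum>A\<in>P. indicator A w *\<^sub>R (z A *\<^sub>R e A)) \<in> borel_measurable M"
      using cell_sets[OF P] by (intro borel_measurable_sum borel_measurable_scaleR borel_measurable_indicator) auto
  qed
  have int1: "integrable M (\<lambda>s. \<Sum>A\<in>P. indicator A s * z A powr p)"
  proof (rule Bochner_Integration.integrable_sum)
    fix A assume "A \<in> P"
    then have "integrable M (indicator A :: _ \<Rightarrow> real)"
      using cell_sets[OF P] emeasure_M_fin by (intro integrable_real_indicator) auto
    then show "integrable M (\<lambda>s. indicator A s * z A powr p)" by (rule integrable_mult_left)
  qed
  have int2: "integrable M (\<lambda>s. norm (x s) powr p)"
  proof -
    have "integrable M (\<lambda>s. norm (x s) powr p) \<longleftrightarrow> integrable M (\<lambda>s. \<Sum>A\<in>P. indicator A s * z A powr p)"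
      by (intro Bochner_Integration.integrable_cong) (auto simp: pw)
    with int1 show ?thesis by simp
  qed
  have "integral\<^sup>L M (\<lambda>s. norm (x s) powr p) = integral\<^sup>L M (\<lambda>s. \<Sum>A\<in>P. indicator A s * z A powr p)"
    by (intro Bochner_Integration.integral_cong) (auto simp: pw)
  also have "\<dots> = (\<Sum>A\<in>P. measure lebesgue A * z A powr p)"
    using cell_sets[OF P] emeasure_M_fin
    by (subst Bochner_Integration.integral_sum) (auto simp: integrable_indicator_iff Int_absorb2)
  finally have I: "integral\<^sup>L M (\<lambda>s. norm (x s) powr p) \<le> r powr p" using sumle by simp
  have I0: "0 \<le> integral\<^sup>L M (\<lambda>s. norm (x s) powr p)" by (intro integral_nonneg_AE) auto
  have "Lp_norm p \<Omega> x \<le> (r powr p) powr (1/p)"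
    unfolding Lp_norm_def using I I0 p1 by (intro powr_mono2) auto
  also have "\<dots> = r" using r0 p1 by (simp add: powr_powr)
  finally show ?thesis using meas int2 by (simp add: Bp_def in_Lp_def)
qed

end

context setting begin

lemma part_integral:
  fixes f :: "real^'k \<Rightarrow> 'b::{banach,second_countable_topology}"
  assumes P: "is_Delta_partition \<Omega> \<Delta> P" and f: "integrable M f"
  shows "(\<Sum>A\<in>P. integral\<^sup>L M (\<lambda>s. indicator A s *\<^sub>R f s)) = integral\<^sup>L M f"
proof -
  have "(\<Sum>A\<in>P. integral\<^sup>L M (\<lambda>s. indicator A s *\<^sub>R f s)) = integral\<^sup>L M (\<lambda>s. \<Sum>A\<in>P. indicator A s *\<^sub>R f s)"
    using cell_sets[OF P] f
    by (intro Bochner_Integration.integral_sum[symmetric] integrable_mult_indicator) auto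
  also have "\<dots> = integral\<^sup>L M f"
  proof (intro Bochner_Integration.integral_cong refl)
    fix s assume "s \<in> space M"
    then obtain A0 where "A0 \<in> P" "s \<in> A0" using cell_cover[OF P] by auto
    then show "(\<Sum>A\<in>P. indicator A s *\<^sub>R f s) = f s"
      using part_sum[OF part_disj[OF P] _ _ part_fin[OF P], of A0 s "\<lambda>_. f s"] by simp
  qed
  finally show ?thesis .
qed

lemma part_measure:
  assumes P: "is_Delta_partition \<Omega> \<Delta> P"
  shows "(\<Sum>A\<in>P. measure lebesgue A) = mO"
proof -
  have "integrable M (\<lambda>_. 1::real)"
    by (rule finite_measure.integrable_const[OF finM])
  from part_integral[OF P this] have "(\<Sum>A\<in>P. integral\<^sup>L M (indicator A :: _ \<Rightarrow> real)) = measure M \<Omega>"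
    by simp
  moreover have "A \<in> P \<Longrightarrow> integral\<^sup>L M (indicator A :: _ \<Rightarrow> real) = measure lebesgue A" for A
    using cell_sets[OF P, of A] by (simp add: Int_absorb2)
  moreover have "measure M \<Omega> = mO" by (simp add: mO_def measure_restrict_space)
  ultimately show ?thesis by simp
qed

lemma null_cell_integral:
  fixes f :: "real^'k \<Rightarrow> 'b::{banach,second_countable_topology}"
  assumes P: "is_Delta_partition \<Omega> \<Delta> P" "A \<in> P" and m0: "measure lebesgue A = 0"
    and fm: "f \<in> borel_measurable M"
  shows "integral\<^sup>L M (\<lambda>s. indicator A s *\<^sub>R f s) = 0"
proof -
  have "A \<in> lmeasurable" using cell_sets(2,3)[OF P] Om_lmeas fmeasurableI2 by blast
  then have "emeasure M A = 0"
    using cell_sets[OF P] m0 by (simp add: emeasure_restrict_space emeasure_eq_measure2)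
  then have "A \<in> null_sets M" using cell_sets[OF P] by auto
  then have "AE s in M. indicator A s *\<^sub>R f s = 0" by (auto dest: AE_not_in)
  then have "integral\<^sup>L M (\<lambda>s. indicator A s *\<^sub>R f s) = integral\<^sup>L M (\<lambda>s. 0::'b)"
    using cell_sets[OF P] fm by (intro integral_cong_AE) auto
  then show ?thesis by simp
qed

end

locale disc = setting \<Omega> K p q r for \<Omega> :: "(real^'k) set" and K :: "real^'k \<Rightarrow> real^'k \<Rightarrow> real^'n^'m" and p q r +
  fixes x :: "real^'k \<Rightarrow> real^'n" and P and \<Delta> \<gamma> :: real and a :: nat and \<sigma> :: real and Es :: "(real^'n) set"
  assumes x: "x \<in> Bp p \<Omega> r" and P: "is_Delta_partition \<Omega> \<Delta> P" and \<gamma>: "\<gamma> > 0" and a: "a \<ge> 1"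
    and \<sigma>: "\<sigma> > 0" and net: "is_finite_net \<sigma> (sphere 0 1) Es"
begin

definition "II A = integral\<^sup>L M (\<lambda>s. indicator A s *\<^sub>R x s)"
definition "mm A = measure lebesgue A"
definition "vv A = II A /\<^sub>R mm A"
definition "dd = \<gamma> / real a"
definition "zz A = real (nat \<lfloor>min (norm (vv A)) \<gamma> / dd\<rfloor>) * dd"
definition "u0 = (SOME u::real^'n. u \<in> sphere 0 1)"
definition "uu A = (if vv A = 0 then u0 else vv A /\<^sub>R norm (vv A))"
definition "ee A = (SOME e. e \<in> Es \<and> dist (uu A) e \<le> \<sigma>)"
definition "xd \<xi> = (\<Sum>A\<in>P. indicator A \<xi> *\<^sub>R (zz A *\<^sub>R ee A))"
definition "JJ A = integral\<^sup>L M (\<lambda>s. indicator A s * norm (x s) powr p)"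

lemma dd_pos: "dd > 0" using \<gamma> a by (simp add: dd_def)
lemma mm_nonneg: "0 \<le> mm A" by (simp add: mm_def)

lemma zz_props: "0 \<le> zz A" "zz A \<le> min (norm (vv A)) \<gamma>" "min (norm (vv A)) \<gamma> - dd < zz A"
  "zz A \<in> unif_grid \<gamma> a"
proof -
  define t where "t = min (norm (vv A)) \<gamma> / dd"
  have t0: "0 \<le> t" using dd_pos \<gamma> by (simp add: t_def)
  have zz: "zz A = real (nat \<lfloor>t\<rfloor>) * dd" by (simp add: zz_def t_def)
  have fl: "real (nat \<lfloor>t\<rfloor>) = of_int \<lfloor>t\<rfloor>" using t0 by simp
  show "0 \<le> zz A" using dd_pos zz by simp
  have "real (nat \<lfloor>t\<rfloor>) \<le> t" using fl by simp
  then have "zz A \<le> t * dd" using zz dd_pos by (simp add: mult_right_mono)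
  then show "zz A \<le> min (norm (vv A)) \<gamma>" using dd_pos by (simp add: t_def)
  have "t - 1 < real (nat \<lfloor>t\<rfloor>)" using fl by linarith
  then have "(t - 1) * dd < zz A" using zz dd_pos by (simp add: mult_strict_right_mono)
  then show "min (norm (vv A)) \<gamma> - dd < zz A" using dd_pos by (simp add: t_def algebra_simps)
  have "t \<le> \<gamma> / dd" using dd_pos by (simp add: t_def divide_right_mono)
  also have "\<gamma> / dd = real a" using \<gamma> a by (simp add: dd_def)
  finally have "nat \<lfloor>t\<rfloor> \<le> a" by linarith
  then show "zz A \<in> unif_grid \<gamma> a" unfolding unif_grid_def zz dd_def by auto
qed

lemma u0: "u0 \<in> sphere 0 1"
proof -
  have "sphere (0::real^'n) 1 \<noteq> {}" by simp
  then show ?thesis unfolding u0_def by (metis ex_in_conv someI_ex)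
qed

lemma uu: "uu A \<in> sphere 0 1" using u0 by (auto simp: uu_def)

lemma ee: "ee A \<in> Es" "dist (uu A) (ee A) \<le> \<sigma>"
proof -
  have "\<exists>e. e \<in> Es \<and> dist (uu A) e \<le> \<sigma>" using net uu by (auto simp: is_finite_net_def)
  then have "ee A \<in> Es \<and> dist (uu A) (ee A) \<le> \<sigma>" unfolding ee_def by (rule someI_ex)
  then show "ee A \<in> Es" "dist (uu A) (ee A) \<le> \<sigma>" by auto
qed

lemma ee_norm: "norm (ee A) = 1" using ee(1)[of A] net by (auto simp: is_finite_net_def)

lemma x_int: "integrable M x" using Bp_integrable[OF x] .
lemma x_meas: "x \<in> borel_measurable M" using Bp_meas[OF x] .

lemma II_eq: "A \<in> P \<Longrightarrow> II A = mm A *\<^sub>R vv A"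
proof (cases "mm A = 0")
  case True
  assume A: "A \<in> P"
  then show ?thesis using null_cell_integral[OF P A _ x_meas] True by (simp add: II_def mm_def)
qed (simp add: vv_def)

lemma JJ_nonneg: "0 \<le> JJ A" unfolding JJ_def by (intro integral_nonneg_AE) auto

lemma Jensen: assumes A: "A \<in> P" shows "mm A * norm (vv A) powr p \<le> JJ A"
proof (cases "mm A = 0")
  case True then show ?thesis using JJ_nonneg by simp
next
  case False
  then have mp: "mm A > 0" using mm_nonneg[of A] by simp
  have Am: "A \<in> sets M" "A \<subseteq> \<Omega>" using cell_sets[OF P A] by auto
  have pint: "integrable M (\<lambda>s. norm (x s) powr p)" using Bp_pow_int[OF x] .
  have Jint: "integrable M (\<lambda>s. indicator A s * norm (x s) powr p)"
    using integrable_mult_indicator[OF Am(1) pint] by simp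
  define f where "f s = indicator A s * norm (x s)" for s
  define g where "g s = (indicator A s :: real)" for s
  have fm: "f \<in> borel_measurable M" unfolding f_def using Am x_meas by measurable
  have gm: "g \<in> borel_measurable M" unfolding g_def using Am by measurable
  have fp: "f s powr p = indicator A s * norm (x s) powr p" for s
    using p1 by (simp add: f_def indicator_def)
  have gq: "g s powr q = indicator A s" for s using q1 by (simp add: g_def indicator_def)
  have "(\<integral>\<^sup>+s. ennreal (f s powr p) \<partial>M) = ennreal (JJ A)"
    unfolding fp JJ_def using Jint by (intro nn_integral_eq_integral) auto
  then have Hf: "(\<integral>\<^sup>+s. ennreal (f s powr p) \<partial>M) \<le> ennreal (JJ A)" by simp
  have "(\<integral>\<^sup>+s. ennreal (g s powr q) \<partial>M) = emeasure M A"
    unfolding gq using Am by (simp add: ennreal_indicator nn_integral_indicator)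
  also have "\<dots> = ennreal (mm A)"
    using Am emeasure_M_fin[of A] by (simp add: mm_def emeasure_eq_measure2 measure_restrict_space emeasure_restrict_space)
      (metis Om_sets emeasure_eq_ennreal_measure emeasure_restrict_space sets.Int_space_eq2 top.not_eq_extremum)
  finally have Hg: "(\<integral>\<^sup>+s. ennreal (g s powr q) \<partial>M) \<le> ennreal (mm A)" by simp
  have H: "(\<integral>\<^sup>+s. ennreal (f s * g s) \<partial>M) \<le> ennreal (JJ A powr (1/p) * mm A powr (1/q))"
    by (rule holder_nn[OF fm gm _ _ p1 pq Hf Hg JJ_nonneg mm_nonneg]) (auto simp: f_def g_def)
  have fg: "f s * g s = norm (indicator A s *\<^sub>R x s)" for s by (simp add: f_def g_def indicator_def)
  have "norm (II A) \<le> integral\<^sup>L M (\<lambda>s. norm (indicator A s *\<^sub>R x s))"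
    unfolding II_def by (rule integral_norm_bound)
  also have "\<dots> \<le> JJ A powr (1/p) * mm A powr (1/q)"
    using H unfolding fg by (intro integral_le_of_nn) auto
  finally have nII: "norm (II A) \<le> JJ A powr (1/p) * mm A powr (1/q)" .
  have e1: "1/q - 1 = - (1/p)" using pq by simp
  have "norm (vv A) = norm (II A) / mm A" using mp by (simp add: vv_def divide_inverse_commute)
  also have "\<dots> \<le> JJ A powr (1/p) * mm A powr (1/q) / mm A"
    using nII mp by (simp add: divide_right_mono)
  also have "\<dots> = JJ A powr (1/p) / mm A powr (1/p)"
  proof -
    have "1/q = 1 - 1/p" using pq by simp
    then have "mm A powr (1/q) = mm A powr 1 / mm A powr (1/p)" by (simp add: powr_diff)
    then have "mm A powr (1/q) / mm A = 1 / mm A powr (1/p)" using mp by simp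
    then show ?thesis by (metis times_divide_eq_right mult.right_neutral)
  qed
  also have "\<dots> = (JJ A / mm A) powr (1/p)" using mp JJ_nonneg by (simp add: powr_divide)
  finally have "norm (vv A) powr p \<le> ((JJ A / mm A) powr (1/p)) powr p"
    using p1 by (intro powr_mono2) auto
  also have "\<dots> = JJ A / mm A" using p1 mp JJ_nonneg by (simp add: powr_powr)
  finally show ?thesis using mp by (simp add: field_simps)
qed

lemma sum_JJ: "(\<Sum>A\<in>P. JJ A) \<le> r powr p"
proof -
  have "(\<Sum>A\<in>P. JJ A) = integral\<^sup>L M (\<lambda>s. norm (x s) powr p)"
    using part_integral[OF P Bp_pow_int[OF x]] by (simp add: JJ_def)
  then show ?thesis using Bp_pow_le[OF x] by simp
qed

lemma sum_mm_vv: "(\<Sum>A\<in>P. mm A * norm (vv A) powr p) \<le> r powr p"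
  using sum_mono[of P "\<lambda>A. mm A * norm (vv A) powr p" JJ] Jensen sum_JJ by force

lemma xd_disc: "xd \<in> Bp_disc p r P (unif_grid \<gamma> a) Es"
proof -
  have "\<forall>A\<in>P. zz A \<in> unif_grid \<gamma> a \<and> ee A \<in> Es \<and> (\<forall>\<xi>\<in>A. xd \<xi> = zz A *\<^sub>R ee A)"
  proof (intro ballI conjI)
    fix A \<xi> assume "A \<in> P" "\<xi> \<in> A"
    then show "xd \<xi> = zz A *\<^sub>R ee A"
      unfolding xd_def using part_sum[OF part_disj[OF P] _ _ part_fin[OF P], of A \<xi> "\<lambda>A. zz A *\<^sub>R ee A"] by simp
  qed (use zz_props ee in auto)
  moreover have "(\<Sum>A\<in>P. measure lebesgue A * zz A powr p) \<le> r powr p"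
  proof -
    have "(\<Sum>A\<in>P. measure lebesgue A * zz A powr p) \<le> (\<Sum>A\<in>P. mm A * norm (vv A) powr p)"
    proof (intro sum_mono)
      fix A assume "A \<in> P"
      have "zz A powr p \<le> norm (vv A) powr p"
        using zz_props[of A] p1 by (intro powr_mono2) auto
      then show "measure lebesgue A * zz A powr p \<le> mm A * norm (vv A) powr p"
        using mm_nonneg[of A] by (simp add: mm_def mult_left_mono)
    qed
    then show ?thesis using sum_mm_vv by linarith
  qed
  ultimately show ?thesis unfolding Bp_disc_def by blast
qed

lemma err: "norm (vv A - zz A *\<^sub>R ee A) \<le> dd + \<gamma> * \<sigma> + 2 * norm (vv A) powr p / \<gamma> powr (p - 1)"
proof -
  define t where "t = norm (vv A)"
  have t0: "0 \<le> t" by (simp add: t_def)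
  have R0: "0 \<le> 2 * t powr p / \<gamma> powr (p - 1)" using \<gamma> by simp
  show ?thesis
  proof (cases "t \<le> \<gamma>")
    case True
    then have z1: "zz A \<le> t" "t - dd < zz A" using zz_props[of A] by (auto simp: t_def)
    have "norm (vv A - zz A *\<^sub>R ee A) \<le> dd + \<gamma> * \<sigma>"
    proof (cases "vv A = 0")
      case True
      then have "zz A = 0" using z1 zz_props[of A] by (simp add: t_def)
      then show ?thesis using True dd_pos \<gamma> \<sigma> by simp
    next
      case False
      then have tp: "t > 0" by (simp add: t_def)
      have vu: "vv A = t *\<^sub>R uu A" using False by (simp add: uu_def t_def)
      have "vv A - zz A *\<^sub>R ee A = (t - zz A) *\<^sub>R uu A + zz A *\<^sub>R (uu A - ee A)"
        by (simp add: vu algebra_simps)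
      then have "norm (vv A - zz A *\<^sub>R ee A) \<le> norm ((t - zz A) *\<^sub>R uu A) + norm (zz A *\<^sub>R (uu A - ee A))"
        by (metis norm_triangle_ineq)
      also have "norm ((t - zz A) *\<^sub>R uu A) = t - zz A" using z1 uu[of A] by simp
      also have "norm (zz A *\<^sub>R (uu A - ee A)) = zz A * dist (uu A) (ee A)"
        using zz_props[of A] by (simp add: dist_norm)
      also have "zz A * dist (uu A) (ee A) \<le> \<gamma> * \<sigma>"
        using zz_props[of A] ee(2)[of A] \<gamma> by (intro mult_mono) auto
      finally show ?thesis using z1 by linarith
    qed
    then show ?thesis using R0 unfolding t_def by linarith
  next
    case False
    then have z1: "zz A \<le> \<gamma>" using zz_props[of A] by auto
    have "norm (vv A - zz A *\<^sub>R ee A) \<le> norm (vv A) + norm (zz A *\<^sub>R ee A)" by (rule norm_triangle_ineq4)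
    also have "norm (zz A *\<^sub>R ee A) = zz A" using zz_props[of A] ee_norm[of A] by simp
    finally have "norm (vv A - zz A *\<^sub>R ee A) \<le> 2 * t" using z1 False by (simp add: t_def)
    also have "2 * t \<le> 2 * t powr p / \<gamma> powr (p - 1)"
    proof -
      have "\<gamma> powr (p - 1) \<le> t powr (p - 1)" using False \<gamma> p1 by (intro powr_mono2) auto
      then have "t * \<gamma> powr (p - 1) \<le> t * t powr (p - 1)" using t0 by (simp add: mult_left_mono)
      also have "t * t powr (p - 1) = t powr p"
        using False \<gamma> by (simp add: powr_mult_base)
      finally show ?thesis using \<gamma> by (simp add: field_simps)
    qed
    finally have X: "norm (vv A - zz A *\<^sub>R ee A) \<le> 2 * t powr p / \<gamma> powr (p - 1)" .
    show ?thesis using X dd_pos mult_pos_pos[OF \<gamma> \<sigma>] unfolding t_def by linarith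
  qed
qed

lemma sum_err: "(\<Sum>A\<in>P. mm A * norm (vv A - zz A *\<^sub>R ee A)) \<le> mO * (dd + \<gamma> * \<sigma>) + 2 * r powr p / \<gamma> powr (p - 1)"
proof -
  have "(\<Sum>A\<in>P. mm A * norm (vv A - zz A *\<^sub>R ee A))
      \<le> (\<Sum>A\<in>P. mm A * (dd + \<gamma> * \<sigma>) + (2 / \<gamma> powr (p - 1)) * (mm A * norm (vv A) powr p))"
  proof (intro sum_mono)
    fix A
    have "mm A * norm (vv A - zz A *\<^sub>R ee A) \<le> mm A * (dd + \<gamma> * \<sigma> + 2 * norm (vv A) powr p / \<gamma> powr (p - 1))"
      using err mm_nonneg by (intro mult_left_mono) auto
    then show "mm A * norm (vv A - zz A *\<^sub>R ee A) \<le> mm A * (dd + \<gamma> * \<sigma>) + (2 / \<gamma> powr (p - 1)) * (mm A * norm (vv A) powr p)"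
      by (simp add: algebra_simps)
  qed
  also have "\<dots> = (\<Sum>A\<in>P. mm A) * (dd + \<gamma> * \<sigma>) + (2 / \<gamma> powr (p - 1)) * (\<Sum>A\<in>P. mm A * norm (vv A) powr p)"
    by (simp add: sum.distrib sum_distrib_left sum_distrib_right)
  also have "(\<Sum>A\<in>P. mm A) = mO" using part_measure[OF P] by (simp add: mm_def)
  also have "(2 / \<gamma> powr (p - 1)) * (\<Sum>A\<in>P. mm A * norm (vv A) powr p) \<le> (2 / \<gamma> powr (p - 1)) * r powr p"
    using sum_mm_vv \<gamma> by (intro mult_left_mono) auto
  finally show ?thesis by simp
qed

end

context setting begin

definition "Kp z = indicator (\<Omega> \<times> \<Omega>) z *\<^sub>R (case z of (\<xi>, s) \<Rightarrow> K \<xi> s)"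

lemma OO_lmeas: "\<Omega> \<times> \<Omega> \<in> lmeasurable" using cpt by (simp add: lmeasurable_compact compact_Times)
lemma OO_sets[simp]: "\<Omega> \<times> \<Omega> \<in> sets lebesgue" using OO_lmeas by (simp add: fmeasurableD)
lemma OO_borel[simp, measurable]: "\<Omega> \<times> \<Omega> \<in> sets borel" using cpt by (simp add: compact_Times compact_imp_closed borel_closed)

lemma Kp_meas: "Kp \<in> borel_measurable lebesgue"
proof -
  have "(\<lambda>z. indicator (\<Omega> \<times> \<Omega>) z *\<^sub>R (case z of (\<xi>, s) \<Rightarrow> K \<xi> s)) \<in> borel_measurable lebesgue"
    using Kmeas by (subst borel_measurable_restrict_space_iff[symmetric]) auto
  then show ?thesis by (simp add: Kp_def[abs_def])
qed

lemma Om_borel_m[measurable]: "\<Omega> \<in> sets borel" by simp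

lemma ind_snd_meas[measurable]: "(\<lambda>z::(real^'k) \<times> (real^'k). indicator \<Omega> (snd z) :: ennreal) \<in> borel_measurable borel"
  using measurable_compose[OF borel_measurable_continuous_onI[OF continuous_on_snd[OF continuous_on_id]] borel_measurable_indicator[OF Om_borel_m]]
  by simp

lemma K0_ex: "\<exists>K0. K0 \<in> borel_measurable lborel \<and> (AE z in lborel. Kp z = K0 z)"
proof -
  have "\<forall>b\<in>(Basis :: (real^'n^'m) set). \<exists>g. g \<in> borel_measurable lborel \<and> (AE z in lborel. Kp z \<bullet> b = g z)"
  proof
    fix b :: "real^'n^'m"
    have "(\<lambda>z. Kp z \<bullet> b) \<in> borel_measurable (completion lborel)"
      using Kp_meas by measurable
    then have "\<exists>g\<in>borel_measurable lborel. AE z in lborel. Kp z \<bullet> b = g z"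
      by (rule completion_ex_borel_measurable_real)
    then show "\<exists>g. g \<in> borel_measurable lborel \<and> (AE z in lborel. Kp z \<bullet> b = g z)" by blast
  qed
  from bchoice[OF this] obtain k where kk: "\<forall>b\<in>Basis. k b \<in> borel_measurable lborel \<and> (AE z in lborel. Kp z \<bullet> b = k b z)"
    by blast
  then have k: "\<And>b. b \<in> Basis \<Longrightarrow> k b \<in> borel_measurable lborel"
      "\<And>b. b \<in> Basis \<Longrightarrow> AE z in lborel. Kp z \<bullet> b = k b z" by auto
  define K0 where "K0 z = (\<Sum>b\<in>Basis. k b z *\<^sub>R b)" for z
  have "K0 \<in> borel_measurable lborel"
    unfolding K0_def[abs_def] using k(1) by (intro borel_measurable_sum borel_measurable_scaleR) auto
  moreover have "AE z in lborel. \<forall>b\<in>Basis. Kp z \<bullet> b = k b z"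
    using k(2) by (intro eventually_ball_finite) auto
  then have "AE z in lborel. Kp z = K0 z"
  proof eventually_elim
    case (elim z)
    have "Kp z = (\<Sum>b\<in>Basis. (Kp z \<bullet> b) *\<^sub>R b)" by (rule euclidean_representation[symmetric])
    also have "\<dots> = K0 z" unfolding K0_def using elim by simp
    finally show ?case .
  qed
  ultimately show ?thesis by blast
qed

definition "K0 = (SOME K0. K0 \<in> borel_measurable lborel \<and> (AE z in lborel. Kp z = K0 z))"

lemma K0: "K0 \<in> borel_measurable lborel" "AE z in lborel. Kp z = K0 z"
  using someI_ex[OF K0_ex] by (auto simp: K0_def)

lemma K0_borel[measurable]: "K0 \<in> borel_measurable borel"
  using K0(1) by simp

lemma AE_lborel_M: "(AE \<xi> in lborel. P \<xi>) \<Longrightarrow> AE \<xi> in M. P \<xi>"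
  by (subst AE_restrict_space_iff) (auto dest: AE_completion)

lemma K0_sections: "AE \<xi> in M. AE s in M. K \<xi> s = K0 (\<xi>, s)"
proof -
  have "AE z in (lborel \<Otimes>\<^sub>M lborel). Kp z = K0 z" using K0(2) by (subst lborel_prod)
  then have "AE \<xi> in lborel. AE s in lborel. Kp (\<xi>, s) = K0 (\<xi>, s)"
    by (rule lborel_pair.AE_pair)
  then have "AE \<xi> in M. AE s in lborel. Kp (\<xi>, s) = K0 (\<xi>, s)" by (rule AE_lborel_M)
  then show ?thesis
  proof (rule AE_mp[OF _ AE_I2], intro impI)
    fix \<xi> assume "\<xi> \<in> space M" and ae: "AE s in lborel. Kp (\<xi>, s) = K0 (\<xi>, s)"
    then have "\<xi> \<in> \<Omega>" by simp
    have "AE s in M. Kp (\<xi>, s) = K0 (\<xi>, s)" using ae by (rule AE_lborel_M)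
    then show "AE s in M. K \<xi> s = K0 (\<xi>, s)"
    proof (rule AE_mp[OF _ AE_I2], intro impI)
      fix s assume "s \<in> space M" "Kp (\<xi>, s) = K0 (\<xi>, s)"
      then show "K \<xi> s = K0 (\<xi>, s)" using \<open>\<xi> \<in> \<Omega>\<close> by (simp add: Kp_def)
    qed
  qed
qed

definition "PhiL L \<xi> = (\<integral>\<^sup>+s. ennreal (norm (L (\<xi>, s)) powr q) \<partial>M)"

lemma PhiL_lborel: "PhiL L \<xi> = (\<integral>\<^sup>+s. ennreal (norm (L (\<xi>, s)) powr q) * indicator \<Omega> s \<partial>lborel)"
  unfolding PhiL_def by (rule nn_lebesgue_on_conv) simp

lemma sets_lborel_pair: "sets (lborel \<Otimes>\<^sub>M lborel) = sets (borel :: ((real^'k) \<times> (real^'k)) measure)"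
  by (subst lborel_prod) simp

lemma PhiL_meas:
  fixes L :: "(real^'k) \<times> (real^'k) \<Rightarrow> real^'n^'m"
  assumes L: "L \<in> borel_measurable borel"
  shows "PhiL L \<in> borel_measurable M"
proof -
  note [measurable] = L
  have "(\<lambda>z. ennreal (norm (L z) powr q) * indicator \<Omega> (snd z)) \<in> borel_measurable borel"
    by measurable
  then have "(\<lambda>z. ennreal (norm (L z) powr q) * indicator \<Omega> (snd z)) \<in> borel_measurable (lborel \<Otimes>\<^sub>M lborel)"
    using measurable_cong_sets[OF sets_lborel_pair refl] by blast
  then have "(\<lambda>\<xi>. \<integral>\<^sup>+s. ennreal (norm (L (\<xi>, s)) powr q) * indicator \<Omega> s \<partial>lborel) \<in> borel_measurable lborel"
    by (rule lborel.borel_measurable_nn_integral_fst[where f="\<lambda>z. ennreal (norm (L z) powr q) * indicator \<Omega> (snd z)", simplified])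
  then have "(\<lambda>\<xi>. \<integral>\<^sup>+s. ennreal (norm (L (\<xi>, s)) powr q) * indicator \<Omega> s \<partial>lborel) \<in> borel_measurable M"
    by (intro measurable_restrict_space1 measurable_completion) simp
  then show ?thesis by (simp add: PhiL_lborel[abs_def])
qed

lemma transfer:
  fixes G :: "(real^'k) \<times> (real^'k) \<Rightarrow> real^'n^'m"
  assumes G: "G \<in> borel_measurable borel"
  shows "(\<integral>\<^sup>+z. ennreal (indicator (\<Omega>\<times>\<Omega>) z * norm (Kp z - G z) powr q) \<partial>lebesgue)
       = (\<integral>\<^sup>+\<xi>. PhiL (\<lambda>z. K0 z - G z) \<xi> \<partial>M)"
proof -
  let ?h = "\<lambda>z. ennreal (indicator (\<Omega>\<times>\<Omega>) z * norm (K0 z - G z) powr q)"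
  note [measurable] = G
  have hm: "?h \<in> borel_measurable borel" by measurable
  have "(\<integral>\<^sup>+z. ennreal (indicator (\<Omega>\<times>\<Omega>) z * norm (Kp z - G z) powr q) \<partial>lebesgue) = (\<integral>\<^sup>+z. ?h z \<partial>lebesgue)"
    using AE_completion[OF K0(2)] by (intro nn_integral_cong_AE) (auto elim: AE_mp)
  also have "\<dots> = (\<integral>\<^sup>+z. ?h z \<partial>lborel)" by (simp add: nn_integral_completion)
  also have "\<dots> = (\<integral>\<^sup>+z. ?h z \<partial>(lborel \<Otimes>\<^sub>M lborel))" by (subst lborel_prod) simp
  also have "\<dots> = (\<integral>\<^sup>+\<xi>. \<integral>\<^sup>+s. ?h (\<xi>, s) \<partial>lborel \<partial>lborel)"
    using hm measurable_cong_sets[OF sets_lborel_pair refl]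
    by (intro lborel.nn_integral_fst[symmetric]) blast
  also have "\<dots> = (\<integral>\<^sup>+\<xi>. PhiL (\<lambda>z. K0 z - G z) \<xi> * indicator \<Omega> \<xi> \<partial>lborel)"
  proof (intro nn_integral_cong)
    fix \<xi>
    have "(\<integral>\<^sup>+s. ?h (\<xi>, s) \<partial>lborel) = (\<integral>\<^sup>+s. indicator \<Omega> \<xi> * (ennreal (norm (K0 (\<xi>, s) - G (\<xi>, s)) powr q) * indicator \<Omega> s) \<partial>lborel)"
      by (intro nn_integral_cong) (auto simp: indicator_def)
    also have "\<dots> = indicator \<Omega> \<xi> * PhiL (\<lambda>z. K0 z - G z) \<xi>"
      by (simp add: nn_integral_cmult_indicator nn_integral_cmult PhiL_lborel)
    finally show "(\<integral>\<^sup>+s. ?h (\<xi>, s) \<partial>lborel) = PhiL (\<lambda>z. K0 z - G z) \<xi> * indicator \<Omega> \<xi>"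
      by (simp add: mult.commute)
  qed
  also have "\<dots> = (\<integral>\<^sup>+\<xi>. PhiL (\<lambda>z. K0 z - G z) \<xi> \<partial>M)"
    by (rule nn_lebesgue_on_conv[symmetric]) simp
  finally show ?thesis .
qed

end

definition clipT :: "real \<Rightarrow> 'a::real_normed_vector \<Rightarrow> 'a" where
  "clipT R v = (R / max R (norm v)) *\<^sub>R v"

lemma clipT_cont: "R > 0 \<Longrightarrow> continuous_on UNIV (clipT R)"
  unfolding clipT_def[abs_def]
  by (intro continuous_intros) (auto simp: max_def)

lemma clipT_norm: "R > 0 \<Longrightarrow> norm (clipT R v) \<le> R"
proof (cases "norm v \<le> R")
  case True
  assume "R > 0" then show ?thesis using True by (simp add: clipT_def max_def)
next
  case False
  assume "R > 0" then show ?thesis using False by (simp add: clipT_def max_def)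
qed

lemma clipT_id: "R > 0 \<Longrightarrow> norm v \<le> R \<Longrightarrow> clipT R v = v"
  by (auto simp: clipT_def max_def)

lemma clipT_diff: "R > 0 \<Longrightarrow> norm (v - clipT R v) \<le> norm v"
proof -
  assume R: "R > 0"
  have "v - clipT R v = (1 - R / max R (norm v)) *\<^sub>R v" by (simp add: clipT_def algebra_simps)
  moreover have "0 \<le> 1 - R / max R (norm v)" "1 - R / max R (norm v) \<le> 1" using R by (auto simp: max_def divide_le_eq_1)
  ultimately show ?thesis by (simp add: mult_left_le_one_le)
qed

lemma powr_le_lin: "0 \<le> t \<Longrightarrow> t \<le> B \<Longrightarrow> 1 \<le> q \<Longrightarrow> t powr q \<le> B powr (q - 1) * (t::real)"
proof (cases "t = 0")
  case False
  assume "0 \<le> t" "t \<le> B" "1 \<le> q"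
  then have "t powr q = t powr (q - 1) * t" using False powr_add[of t "q-1" 1] by simp
  also have "\<dots> \<le> B powr (q - 1) * t" using \<open>0 \<le> t\<close> \<open>t \<le> B\<close> \<open>1 \<le> q\<close> by (intro mult_right_mono powr_mono2) auto
  finally show ?thesis .
qed simp

context setting begin

lemma Kp_q_fin: "(\<integral>\<^sup>+z. ennreal (norm (Kp z) powr q) \<partial>lebesgue) < \<infinity>"
proof -
  have "(\<integral>\<^sup>+z. ennreal (norm ((\<lambda>(\<xi>, s). norm (K \<xi> s) powr q) z)) \<partial>lebesgue_on (\<Omega>\<times>\<Omega>)) < \<infinity>"
    using Kint unfolding integrable_iff_bounded by blast
  also have "(\<integral>\<^sup>+z. ennreal (norm ((\<lambda>(\<xi>, s). norm (K \<xi> s) powr q) z)) \<partial>lebesgue_on (\<Omega>\<times>\<Omega>))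
     = (\<integral>\<^sup>+z. ennreal (norm ((\<lambda>(\<xi>, s). norm (K \<xi> s) powr q) z)) * indicator (\<Omega>\<times>\<Omega>) z \<partial>lebesgue)"
    by (simp add: nn_integral_restrict_space)
  also have "\<dots> = (\<integral>\<^sup>+z. ennreal (norm (Kp z) powr q) \<partial>lebesgue)"
    by (intro nn_integral_cong) (auto simp: Kp_def indicator_def)
  finally show ?thesis .
qed

lemma emeasure_OO: "emeasure lebesgue (\<Omega>\<times>\<Omega>) < \<infinity>"
  using OO_lmeas by (simp add: fmeasurable_def)

lemma density_step1:
  assumes e: "e > 0"
  shows "\<exists>R>0. (\<integral>\<^sup>+z. ennreal (norm (Kp z - clipT R (Kp z)) powr q) \<partial>lebesgue) < ennreal e"
proof -
  define u where "u n z = norm (Kp z - clipT (real n + 1) (Kp z)) powr q" for n z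
  have [measurable]: "Kp \<in> borel_measurable lebesgue" by (rule Kp_meas)
  have cm: "clipT R \<in> borel_measurable borel" if "R > 0" for R :: real
    using clipT_cont[OF that] by (rule borel_measurable_continuous_onI)
  have um: "u n \<in> borel_measurable lebesgue" for n
  proof -
    have "(\<lambda>z. clipT (real n + 1) (Kp z)) \<in> borel_measurable lebesgue"
      using measurable_compose[OF Kp_meas cm[of "real n + 1"]] by simp
    then show ?thesis unfolding u_def[abs_def] by measurable
  qed
  have "(\<lambda>i. (\<integral>\<^sup>+z. norm (0 - u i z) \<partial>lebesgue)) \<longlonglongrightarrow> 0"
  proof (rule nn_integral_dominated_convergence_norm[where w="\<lambda>z. norm (Kp z) powr q"])
    show "\<And>i. u i \<in> borel_measurable lebesgue" by (rule um)
    show "(\<lambda>_. 0::real) \<in> borel_measurable lebesgue" by simp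
    show "(\<lambda>z. norm (Kp z) powr q) \<in> borel_measurable lebesgue" by measurable
    show "AE z in lebesgue. norm (u j z) \<le> norm (Kp z) powr q" for j
      using q1 by (intro AE_I2) (auto simp: u_def intro!: powr_mono2 clipT_diff)
    show "(\<integral>\<^sup>+z. ennreal (norm (Kp z) powr q) \<partial>lebesgue) < \<infinity>" by (rule Kp_q_fin)
    show "AE z in lebesgue. (\<lambda>i. u i z) \<longlonglongrightarrow> 0"
    proof (intro AE_I2 tendsto_eventually)
      fix z
      obtain N :: nat where "norm (Kp z) \<le> real N" using real_arch_simple by blast
      then have "\<forall>n\<ge>N. u n z = 0"
        using q1 by (auto simp: u_def clipT_id)
      then show "eventually (\<lambda>n. u n z = 0) sequentially" by (auto simp: eventually_sequentially)
    qed
  qed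
  then have "eventually (\<lambda>i. (\<integral>\<^sup>+z. norm (0 - u i z) \<partial>lebesgue) < ennreal e) sequentially"
    using e by (intro order_tendstoD(2)) auto
  then obtain n where "(\<integral>\<^sup>+z. norm (0 - u n z) \<partial>lebesgue) < ennreal e"
    by (auto simp: eventually_sequentially)
  moreover have "(\<integral>\<^sup>+z. norm (0 - u n z) \<partial>lebesgue) = (\<integral>\<^sup>+z. ennreal (norm (Kp z - clipT (real n + 1) (Kp z)) powr q) \<partial>lebesgue)"
    by (simp add: u_def)
  ultimately show ?thesis by (intro exI[of _ "real n + 1"]) auto
qed

lemma density_step2:
  assumes e: "e > 0" and R: "R > 0"
  shows "\<exists>g. continuous_on UNIV g \<and>
     (\<integral>\<^sup>+z. ennreal (indicator (\<Omega>\<times>\<Omega>) z * norm (clipT R (Kp z) - clipT R (g z))) \<partial>lebesgue) < ennreal e"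
proof -
  have "Kp measurable_on UNIV" using Kp_meas by (intro lebesgue_measurable_imp_measurable_on) auto
  then obtain N g where N: "negligible N" and gc: "\<And>n. continuous_on UNIV (g n)"
    and gl: "\<And>z. z \<notin> N \<Longrightarrow> (\<lambda>n. g n z) \<longlonglongrightarrow> Kp z"
    unfolding measurable_on_def by auto
  have cm: "clipT R \<in> borel_measurable borel"
    using clipT_cont[OF R] by (rule borel_measurable_continuous_onI)
  have gm: "g n \<in> borel_measurable lebesgue" for n
    using borel_measurable_continuous_onI[OF gc[of n]] by (simp add: measurable_completion)
  define u where "u n z = indicator (\<Omega>\<times>\<Omega>) z *\<^sub>R clipT R (g n z)" for n z
  define u' where "u' z = indicator (\<Omega>\<times>\<Omega>) z *\<^sub>R clipT R (Kp z)" for z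
  have [measurable]: "Kp \<in> borel_measurable lebesgue" by (rule Kp_meas)
  have [measurable]: "(\<lambda>x. clipT R (g i x)) \<in> borel_measurable lebesgue" for i
    using measurable_compose[OF gm cm] by simp
  have [measurable]: "(\<lambda>x. clipT R (Kp x)) \<in> borel_measurable lebesgue"
    using measurable_compose[OF Kp_meas cm] by simp
  note OO_sets[measurable]
  have "(\<lambda>i. (\<integral>\<^sup>+z. norm (u' z - u i z) \<partial>lebesgue)) \<longlonglongrightarrow> 0"
  proof (rule nn_integral_dominated_convergence_norm[where w="\<lambda>z. indicator (\<Omega>\<times>\<Omega>) z * R"])
    show "\<And>i. u i \<in> borel_measurable lebesgue"
      unfolding u_def[abs_def] by measurable
    show "u' \<in> borel_measurable lebesgue"
      unfolding u'_def[abs_def] by measurable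
    show "(\<lambda>z. indicator (\<Omega>\<times>\<Omega>) z * R) \<in> borel_measurable lebesgue" by measurable
    show "AE z in lebesgue. norm (u j z) \<le> indicator (\<Omega>\<times>\<Omega>) z * R" for j
      using R by (intro AE_I2) (auto simp: u_def clipT_norm indicator_def)
    have "(\<integral>\<^sup>+z. ennreal (indicator (\<Omega>\<times>\<Omega>) z * R) \<partial>lebesgue) = (\<integral>\<^sup>+z. ennreal R * indicator (\<Omega>\<times>\<Omega>) z \<partial>lebesgue)"
      by (intro nn_integral_cong) (simp add: indicator_def)
    also have "\<dots> = ennreal R * emeasure lebesgue (\<Omega>\<times>\<Omega>)"
      by (rule nn_integral_cmult_indicator) simp
    also have "\<dots> < \<infinity>" using emeasure_OO by (simp add: ennreal_mult_less_top)
    finally show "(\<integral>\<^sup>+z. ennreal (indicator (\<Omega>\<times>\<Omega>) z * R) \<partial>lebesgue) < \<infinity>" .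
    have "AE z in lebesgue. z \<notin> N" using N by (intro AE_not_in) (simp add: negligible_iff_null_sets)
    then show "AE z in lebesgue. (\<lambda>i. u i z) \<longlonglongrightarrow> u' z"
    proof eventually_elim
      case (elim z)
      have "(\<lambda>n. clipT R (g n z)) \<longlonglongrightarrow> clipT R (Kp z)"
        by (rule continuous_on_tendsto_compose[OF clipT_cont[OF R] gl[OF elim]]) auto
      then show ?case unfolding u_def u'_def by (intro tendsto_scaleR tendsto_const)
    qed
  qed
  then have "eventually (\<lambda>i. (\<integral>\<^sup>+z. norm (u' z - u i z) \<partial>lebesgue) < ennreal e) sequentially"
    using e by (intro order_tendstoD(2)) auto
  then obtain n where n: "(\<integral>\<^sup>+z. norm (u' z - u n z) \<partial>lebesgue) < ennreal e"
    by (auto simp: eventually_sequentially)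
  have "(\<integral>\<^sup>+z. norm (u' z - u n z) \<partial>lebesgue) = (\<integral>\<^sup>+z. ennreal (indicator (\<Omega>\<times>\<Omega>) z * norm (clipT R (Kp z) - clipT R (g n z))) \<partial>lebesgue)"
    by (intro nn_integral_cong) (auto simp: u_def u'_def indicator_def)
  then show ?thesis using n gc by auto
qed

lemma density:
  assumes eta: "\<eta> > 0"
  shows "\<exists>G. continuous_on UNIV G \<and>
     (\<integral>\<^sup>+z. ennreal (indicator (\<Omega>\<times>\<Omega>) z * norm (Kp z - G z) powr q) \<partial>lebesgue) \<le> ennreal \<eta>"
proof -
  define e1 where "e1 = \<eta> / (2 * 2 powr q)"
  have e1: "e1 > 0" using eta by (simp add: e1_def)
  obtain R where R: "R > 0" and I1: "(\<integral>\<^sup>+z. ennreal (norm (Kp z - clipT R (Kp z)) powr q) \<partial>lebesgue) < ennreal e1"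
    using density_step1[OF e1] by blast
  define c where "c = (2 * R) powr (q - 1)"
  have c: "c > 0" using R by (simp add: c_def)
  define e2 where "e2 = \<eta> / (2 * 2 powr q * c)"
  have e2: "e2 > 0" using eta c by (simp add: e2_def)
  obtain g where gc: "continuous_on UNIV g"
    and I2: "(\<integral>\<^sup>+z. ennreal (indicator (\<Omega>\<times>\<Omega>) z * norm (clipT R (Kp z) - clipT R (g z))) \<partial>lebesgue) < ennreal e2"
    using density_step2[OF e2 R] by blast
  define G where "G z = clipT R (g z)" for z
  have Gc: "continuous_on UNIV G" unfolding G_def[abs_def]
    using continuous_on_compose[OF gc, of "clipT R"] clipT_cont[OF R] continuous_on_subset[OF clipT_cont[OF R], of "range g"] by (simp add: o_def)
  have cm: "clipT R \<in> borel_measurable borel"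
    using clipT_cont[OF R] by (rule borel_measurable_continuous_onI)
  have gm: "g \<in> borel_measurable lebesgue"
    using borel_measurable_continuous_onI[OF gc] by (simp add: measurable_completion)
  have [measurable]: "Kp \<in> borel_measurable lebesgue" by (rule Kp_meas)
  have [measurable]: "(\<lambda>x. clipT R (g x)) \<in> borel_measurable lebesgue"
    using measurable_compose[OF gm cm] by simp
  have [measurable]: "(\<lambda>x. clipT R (Kp x)) \<in> borel_measurable lebesgue"
    using measurable_compose[OF Kp_meas cm] by simp
  note OO_sets[measurable]
  define a where "a z = norm (Kp z - clipT R (Kp z))" for z
  define b where "b z = indicator (\<Omega>\<times>\<Omega>) z * norm (clipT R (Kp z) - clipT R (g z))" for z
  have pt: "indicator (\<Omega>\<times>\<Omega>) z * norm (Kp z - G z) powr q \<le> 2 powr q * a z powr q + (2 powr q * c) * b z" for z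
  proof (cases "z \<in> \<Omega>\<times>\<Omega>")
    case True
    have bz: "b z = norm (clipT R (Kp z) - clipT R (g z))" using True by (simp add: b_def)
    have "norm (Kp z - G z) \<le> a z + b z" unfolding a_def bz G_def
      by (metis norm_triangle_ineq diff_add_cancel add_diff_eq)
    then have "norm (Kp z - G z) powr q \<le> (a z + b z) powr q" using q1 by (intro powr_mono2) auto
    also have "\<dots> \<le> 2 powr q * (a z powr q + b z powr q)"
      using q1 by (intro sum_powr_le) (auto simp: a_def b_def)
    also have "b z powr q \<le> c * b z"
    proof -
      have "b z \<le> norm (clipT R (Kp z)) + norm (clipT R (g z))" unfolding bz by (rule norm_triangle_ineq4)
      also have "\<dots> \<le> 2 * R" using clipT_norm[OF R, of "Kp z"] clipT_norm[OF R, of "g z"] by simp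
      finally show ?thesis unfolding c_def using q1 by (intro powr_le_lin) (auto simp: bz)
    qed
    finally show ?thesis using True by (simp add: algebra_simps mult_left_mono)
  next
    case False
    then show ?thesis using c by (simp add: a_def b_def)
  qed
  have "(\<integral>\<^sup>+z. ennreal (indicator (\<Omega>\<times>\<Omega>) z * norm (Kp z - G z) powr q) \<partial>lebesgue)
      \<le> (\<integral>\<^sup>+z. ennreal (2 powr q) * ennreal (a z powr q) + ennreal (2 powr q * c) * ennreal (b z) \<partial>lebesgue)"
  proof (intro nn_integral_mono)
    fix z
    have "ennreal (indicator (\<Omega>\<times>\<Omega>) z * norm (Kp z - G z) powr q) \<le> ennreal (2 powr q * a z powr q + (2 powr q * c) * b z)"
      using pt by (rule ennreal_leI)
    also have "\<dots> = ennreal (2 powr q) * ennreal (a z powr q) + ennreal (2 powr q * c) * ennreal (b z)"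
      using c by (simp add: ennreal_plus[symmetric] ennreal_mult[symmetric] b_def del: ennreal_plus)
    finally show "ennreal (indicator (\<Omega>\<times>\<Omega>) z * norm (Kp z - G z) powr q) \<le> ennreal (2 powr q) * ennreal (a z powr q) + ennreal (2 powr q * c) * ennreal (b z)" .
  qed
  also have "\<dots> = ennreal (2 powr q) * (\<integral>\<^sup>+z. ennreal (a z powr q) \<partial>lebesgue) + ennreal (2 powr q * c) * (\<integral>\<^sup>+z. ennreal (b z) \<partial>lebesgue)"
    by (subst nn_integral_add) (auto simp: nn_integral_cmult a_def b_def)
  also have "\<dots> \<le> ennreal (2 powr q) * ennreal e1 + ennreal (2 powr q * c) * ennreal e2"
    using I1 I2 by (intro add_mono mult_left_mono) (auto simp: a_def b_def)
  also have "\<dots> = ennreal (2 powr q * e1 + 2 powr q * c * e2)"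
    using c e1 e2 by (simp add: ennreal_plus[symmetric] ennreal_mult[symmetric] del: ennreal_plus)
  also have "2 powr q * e1 + 2 powr q * c * e2 = \<eta>"
    using c by (simp add: e1_def e2_def field_simps)
  finally show ?thesis using Gc by blast
qed

end

lemma bilinear_mv: "bilinear (\<lambda>(A::real^'n^'m) (v::real^'n). A *v v)"
  unfolding bilinear_def
  by (auto intro!: linearI simp: matrix_vector_mult_add_rdistrib matrix_vector_right_distrib
      matrix_vector_mult_scaleR scaleR_matrix_vector_assoc)

context setting begin

lemma meas_M: "f \<in> borel_measurable borel \<Longrightarrow> f \<in> borel_measurable M"
  by (intro measurable_restrict_space1 measurable_completion) simp

lemma sec_meas:
  fixes L :: "(real^'k) \<times> (real^'k) \<Rightarrow> 'b::real_normed_vector"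
  assumes "L \<in> borel_measurable borel"
  shows "(\<lambda>s. L (\<xi>, s)) \<in> borel_measurable M"
proof -
  have "Pair \<xi> \<in> borel_measurable borel"
    by (intro borel_measurable_continuous_onI continuous_intros)
  then have "(\<lambda>s. L (\<xi>, s)) \<in> borel_measurable borel"
    using measurable_compose[OF _ assms, of "Pair \<xi>"] by simp
  then show ?thesis by (rule meas_M)
qed

lemma mv_meas:
  fixes A :: "real^'k \<Rightarrow> real^'n^'m" and y :: "real^'k \<Rightarrow> real^'n"
  assumes "A \<in> borel_measurable M" "y \<in> borel_measurable M"
  shows "(\<lambda>s. A s *v y s) \<in> borel_measurable M"
  using borel_measurable_bilinear[OF bilinear_mv assms Om_sets] by simp

lemma AE_meas:
  fixes f g :: "real^'k \<Rightarrow> 'b::euclidean_space"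
  assumes f: "f \<in> borel_measurable M" and ae: "AE s in M. f s = g s"
  shows "g \<in> borel_measurable M"
proof -
  have "(\<lambda>s. indicator \<Omega> s *\<^sub>R f s) \<in> borel_measurable lebesgue"
    using f by (subst borel_measurable_restrict_space_iff[symmetric]) auto
  moreover have "AE s in lebesgue. indicator \<Omega> s *\<^sub>R f s = indicator \<Omega> s *\<^sub>R g s"
    using ae by (subst (asm) AE_restrict_space_iff) (auto elim!: AE_mp)
  ultimately have "(\<lambda>s. indicator \<Omega> s *\<^sub>R g s) \<in> borel_measurable lebesgue"
    by (rule borel_measurable_AE)
  then show ?thesis by (subst borel_measurable_restrict_space_iff) auto
qed

context
  fixes L G :: "(real^'k) \<times> (real^'k) \<Rightarrow> real^'n^'m" and \<xi> and Mg :: real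
  assumes Lm: "L \<in> borel_measurable borel" and Gm: "G \<in> borel_measurable borel"
    and Phi: "PhiL L \<xi> < \<infinity>"
    and Gb: "\<And>s. s \<in> \<Omega> \<Longrightarrow> norm (G (\<xi>, s)) \<le> Mg"
begin

lemma Lsec_holder:
  assumes y: "y \<in> Bp p \<Omega> r"
  shows "(\<integral>\<^sup>+s. ennreal (norm (L (\<xi>, s)) * norm (y s)) \<partial>M) \<le> ennreal (enn2real (PhiL L \<xi>) powr (1/q) * r)"
proof -
  have fm: "(\<lambda>s. norm (y s)) \<in> borel_measurable M" using Bp_meas[OF y] by measurable
  have gm: "(\<lambda>s. norm (L (\<xi>, s))) \<in> borel_measurable M" using sec_meas[OF Lm] by measurable
  have B: "(\<integral>\<^sup>+s. ennreal (norm (L (\<xi>, s)) powr q) \<partial>M) \<le> ennreal (enn2real (PhiL L \<xi>))"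
    using Phi by (simp add: PhiL_def less_top)
  have "(\<integral>\<^sup>+s. ennreal (norm (y s) * norm (L (\<xi>, s))) \<partial>M) \<le> ennreal ((r powr p) powr (1/p) * enn2real (PhiL L \<xi>) powr (1/q))"
    by (rule holder_nn[OF fm gm _ _ p1 pq Bp_pow_nn[OF y] B]) auto
  also have "(r powr p) powr (1/p) = r" using r0 p1 by (simp add: powr_powr)
  finally show ?thesis by (simp add: mult.commute)
qed

lemma Lsec_int:
  assumes y: "y \<in> Bp p \<Omega> r"
  shows "integrable M (\<lambda>s. L (\<xi>, s) *v y s)"
    and "norm (integral\<^sup>L M (\<lambda>s. L (\<xi>, s) *v y s)) \<le> enn2real (PhiL L \<xi>) powr (1/q) * r"
proof -
  have m: "(\<lambda>s. L (\<xi>, s) *v y s) \<in> borel_measurable M"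
    by (rule mv_meas[OF sec_meas[OF Lm] Bp_meas[OF y]])
  have le: "(\<integral>\<^sup>+s. ennreal (norm (L (\<xi>, s) *v y s)) \<partial>M) \<le> ennreal (enn2real (PhiL L \<xi>) powr (1/q) * r)"
    using Lsec_holder[OF y] by (rule order_trans[rotated]) (intro nn_integral_mono ennreal_leI norm_mv)
  show i: "integrable M (\<lambda>s. L (\<xi>, s) *v y s)"
    using m le by (intro integrableI_bounded) (auto simp: top.not_eq_extremum dest: order.strict_trans1[OF _ ennreal_less_top])
  have "norm (integral\<^sup>L M (\<lambda>s. L (\<xi>, s) *v y s)) \<le> integral\<^sup>L M (\<lambda>s. norm (L (\<xi>, s) *v y s))"
    by (rule integral_norm_bound)
  also have "\<dots> \<le> enn2real (PhiL L \<xi>) powr (1/q) * r"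
    using le by (intro integral_le_of_nn) (auto simp: r0 less_imp_le)
  finally show "norm (integral\<^sup>L M (\<lambda>s. L (\<xi>, s) *v y s)) \<le> enn2real (PhiL L \<xi>) powr (1/q) * r" .
qed

lemma Gsec_int:
  assumes y: "y \<in> Bp p \<Omega> r"
  shows "integrable M (\<lambda>s. G (\<xi>, s) *v y s)"
proof -
  have m: "(\<lambda>s. G (\<xi>, s) *v y s) \<in> borel_measurable M"
    by (rule mv_meas[OF sec_meas[OF Gm] Bp_meas[OF y]])
  have "(\<integral>\<^sup>+s. ennreal (norm (G (\<xi>, s) *v y s)) \<partial>M) \<le> (\<integral>\<^sup>+s. ennreal (max Mg 0) * ennreal (norm (y s)) \<partial>M)"
  proof (intro nn_integral_mono)
    fix s assume "s \<in> space M"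
    then have "norm (G (\<xi>, s) *v y s) \<le> max Mg 0 * norm (y s)"
      using Gb[of s] norm_mv[of "G (\<xi>, s)" "y s"] by (smt (verit) mult_right_mono norm_ge_zero space_M)
    then show "ennreal (norm (G (\<xi>, s) *v y s)) \<le> ennreal (max Mg 0) * ennreal (norm (y s))"
      by (simp add: ennreal_mult[symmetric] ennreal_leI)
  qed
  also have "\<dots> = ennreal (max Mg 0) * (\<integral>\<^sup>+s. ennreal (norm (y s)) \<partial>M)"
    using Bp_meas[OF y] by (intro nn_integral_cmult) auto
  also have "\<dots> \<le> ennreal (max Mg 0) * ennreal (mO + r powr p)"
    by (intro mult_left_mono Bp_norm_nn[OF y]) auto
  also have "\<dots> < \<infinity>" by (simp add: ennreal_mult_less_top)
  finally show ?thesis using m by (intro integrableI_bounded)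
qed

lemma intop_split:
  assumes y: "y \<in> Bp p \<Omega> r" and sec: "AE s in M. K \<xi> s = K0 (\<xi>, s)"
    and KLG: "\<And>z. K0 z = L z + G z"
  shows "intop \<Omega> K y \<xi> = integral\<^sup>L M (\<lambda>s. L (\<xi>, s) *v y s) + integral\<^sup>L M (\<lambda>s. G (\<xi>, s) *v y s)"
proof -
  have m0: "(\<lambda>s. K0 (\<xi>, s) *v y s) \<in> borel_measurable M"
    by (rule mv_meas[OF sec_meas[OF K0_borel] Bp_meas[OF y]])
  have ae: "AE s in M. K0 (\<xi>, s) *v y s = K \<xi> s *v y s" using sec by eventually_elim simp
  have m1: "(\<lambda>s. K \<xi> s *v y s) \<in> borel_measurable M" by (rule AE_meas[OF m0 ae])
  have "intop \<Omega> K y \<xi> = integral\<^sup>L M (\<lambda>s. K0 (\<xi>, s) *v y s)"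
    unfolding intop_def using ae m0 m1 by (intro integral_cong_AE) (auto elim: AE_mp)
  also have "\<dots> = integral\<^sup>L M (\<lambda>s. L (\<xi>, s) *v y s + G (\<xi>, s) *v y s)"
    by (simp add: KLG matrix_vector_mult_add_rdistrib)
  also have "\<dots> = integral\<^sup>L M (\<lambda>s. L (\<xi>, s) *v y s) + integral\<^sup>L M (\<lambda>s. G (\<xi>, s) *v y s)"
    by (rule Bochner_Integration.integral_add[OF Lsec_int(1)[OF y] Gsec_int[OF y]])
  finally show ?thesis .
qed

end
end

context disc begin

lemma grid_nonneg: "unif_grid \<gamma> a \<subseteq> {0..}"
  using \<gamma> by (auto simp: unif_grid_def)

lemma net_sphere: "Es \<subseteq> sphere 0 1" using net by (simp add: is_finite_net_def)

lemma xdB: "xd \<in> Bp p \<Omega> r"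
  by (rule Bp_disc_sub[OF P grid_nonneg net_sphere xd_disc])

lemma xd_int: "integrable M xd" using Bp_integrable[OF xdB] .

lemma w_int: "integrable M (\<lambda>s. x s - xd s)" using x_int xd_int by auto

lemma w_norm_int: "integral\<^sup>L M (\<lambda>s. norm (x s - xd s)) \<le> 2 * (mO + r powr p)"
proof -
  have "integral\<^sup>L M (\<lambda>s. norm (x s - xd s)) \<le> integral\<^sup>L M (\<lambda>s. norm (x s) + norm (xd s))"
    using x_int xd_int by (intro integral_mono) (auto intro: norm_triangle_ineq4)
  also have "\<dots> = integral\<^sup>L M (\<lambda>s. norm (x s)) + integral\<^sup>L M (\<lambda>s. norm (xd s))"
    using x_int xd_int by (intro Bochner_Integration.integral_add) auto
  also have "integral\<^sup>L M (\<lambda>s. norm (x s)) \<le> mO + r powr p"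
    using Bp_norm_nn[OF x] mO_nonneg by (intro integral_le_of_nn) auto
  also have "integral\<^sup>L M (\<lambda>s. norm (xd s)) \<le> mO + r powr p"
    using Bp_norm_nn[OF xdB] mO_nonneg by (intro integral_le_of_nn) auto
  finally show ?thesis by simp
qed

lemma int_cell_xd: assumes A: "A \<in> P"
  shows "integral\<^sup>L M (\<lambda>s. indicator A s *\<^sub>R xd s) = mm A *\<^sub>R (zz A *\<^sub>R ee A)"
proof -
  have "integral\<^sup>L M (\<lambda>s. indicator A s *\<^sub>R xd s) = integral\<^sup>L M (\<lambda>s. indicator A s *\<^sub>R (zz A *\<^sub>R ee A))"
  proof (intro Bochner_Integration.integral_cong refl)
    fix s
    show "indicator A s *\<^sub>R xd s = indicator A s *\<^sub>R (zz A *\<^sub>R ee A)"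
    proof (cases "s \<in> A")
      case True
      then show ?thesis unfolding xd_def
        using part_sum[OF part_disj[OF P] A True part_fin[OF P], of "\<lambda>A. zz A *\<^sub>R ee A"] by simp
    qed simp
  qed
  also have "\<dots> = integral\<^sup>L M (indicator A :: _ \<Rightarrow> real) *\<^sub>R (zz A *\<^sub>R ee A)"
    using cell_sets[OF P A] emeasure_M_fin[of A] by (intro integral_scaleR_left) auto
  also have "integral\<^sup>L M (indicator A :: _ \<Rightarrow> real) = mm A"
    using cell_sets[OF P A] by (simp add: mm_def Int_absorb2)
  finally show ?thesis .
qed

lemma cell_w: assumes A: "A \<in> P"
  shows "integral\<^sup>L M (\<lambda>s. indicator A s *\<^sub>R (x s - xd s)) = mm A *\<^sub>R (vv A - zz A *\<^sub>R ee A)"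
proof -
  have "integral\<^sup>L M (\<lambda>s. indicator A s *\<^sub>R (x s - xd s)) = integral\<^sup>L M (\<lambda>s. indicator A s *\<^sub>R x s - indicator A s *\<^sub>R xd s)"
    by (simp add: algebra_simps)
  also have "\<dots> = II A - integral\<^sup>L M (\<lambda>s. indicator A s *\<^sub>R xd s)"
    using cell_sets[OF P A] x_int xd_int unfolding II_def
    by (intro Bochner_Integration.integral_diff integrable_mult_indicator) auto
  also have "\<dots> = mm A *\<^sub>R (vv A - zz A *\<^sub>R ee A)"
    using II_eq[OF A] int_cell_xd[OF A] by (simp add: algebra_simps)
  finally show ?thesis .
qed

lemma Gpart:
  fixes G :: "(real^'k) \<times> (real^'k) \<Rightarrow> real^'n^'m" and \<xi> and Mg \<omega> :: real
  assumes Gm: "G \<in> borel_measurable borel"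
    and Gb: "\<And>s. s \<in> \<Omega> \<Longrightarrow> norm (G (\<xi>, s)) \<le> Mg" and Mg: "0 \<le> Mg"
    and Gu: "\<And>s c. s \<in> \<Omega> \<Longrightarrow> c \<in> \<Omega> \<Longrightarrow> dist s c \<le> \<Delta> \<Longrightarrow> norm (G (\<xi>, s) - G (\<xi>, c)) \<le> \<omega>"
    and om: "0 \<le> \<omega>"
    and ix: "integrable M (\<lambda>s. G (\<xi>, s) *v x s)" and id: "integrable M (\<lambda>s. G (\<xi>, s) *v xd s)"
  shows "norm (integral\<^sup>L M (\<lambda>s. G (\<xi>, s) *v x s) - integral\<^sup>L M (\<lambda>s. G (\<xi>, s) *v xd s))
     \<le> \<omega> * (2 * (mO + r powr p)) + Mg * (mO * (dd + \<gamma> * \<sigma>) + 2 * r powr p / \<gamma> powr (p - 1))"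
proof -
  define w where "w s = x s - xd s" for s
  have wi: "integrable M w" using w_int by (simp add: w_def[abs_def])
  have Gw: "integrable M (\<lambda>s. G (\<xi>, s) *v w s)"
    using Bochner_Integration.integrable_diff[OF ix id] by (simp add: w_def matrix_vector_mult_diff_distrib)
  have "integral\<^sup>L M (\<lambda>s. G (\<xi>, s) *v x s) - integral\<^sup>L M (\<lambda>s. G (\<xi>, s) *v xd s) = integral\<^sup>L M (\<lambda>s. G (\<xi>, s) *v w s)"
    using Bochner_Integration.integral_diff[OF ix id] by (simp add: w_def matrix_vector_mult_diff_distrib)
  also have "\<dots> = (\<Sum>A\<in>P. integral\<^sup>L M (\<lambda>s. indicator A s *\<^sub>R (G (\<xi>, s) *v w s)))"
    by (rule part_integral[OF P Gw, symmetric])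
  finally have eq: "integral\<^sup>L M (\<lambda>s. G (\<xi>, s) *v x s) - integral\<^sup>L M (\<lambda>s. G (\<xi>, s) *v xd s) = (\<Sum>A\<in>P. integral\<^sup>L M (\<lambda>s. indicator A s *\<^sub>R (G (\<xi>, s) *v w s)))" .
  have cellb: "norm (integral\<^sup>L M (\<lambda>s. indicator A s *\<^sub>R (G (\<xi>, s) *v w s)))
      \<le> \<omega> * integral\<^sup>L M (\<lambda>s. indicator A s * norm (w s)) + Mg * (mm A * norm (vv A - zz A *\<^sub>R ee A))"
    if A: "A \<in> P" for A
  proof (cases "A = {}")
    case True
    then show ?thesis using om Mg mm_nonneg[of A] by simp
  next
    case False
    then obtain c where c: "c \<in> A" by blast
    have AO: "A \<subseteq> \<Omega>" "A \<in> sets M" using cell_sets[OF P A] by auto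
    have bA: "bounded A" using AO cpt by (meson bounded_subset compact_imp_bounded)
    have dA: "diameter A \<le> \<Delta>" using P A by (auto simp: is_Delta_partition_def)
    define T where "T s = indicator A s *\<^sub>R (G (\<xi>, s) *v w s)" for s
    define U where "U s = G (\<xi>, c) *v (indicator A s *\<^sub>R w s)" for s
    have Ti: "integrable M T" unfolding T_def using integrable_mult_indicator[OF AO(2) Gw] .
    have Aw: "integrable M (\<lambda>s. indicator A s *\<^sub>R w s)" using integrable_mult_indicator[OF AO(2) wi] .
    have Ui: "integrable M U" unfolding U_def
      by (rule integrable_bounded_linear[OF matrix_vector_mul_bounded_linear Aw])
    have "integral\<^sup>L M T = integral\<^sup>L M (\<lambda>s. T s - U s) + integral\<^sup>L M U"
      using Ti Ui by simp
    then have "norm (integral\<^sup>L M T) \<le> norm (integral\<^sup>L M (\<lambda>s. T s - U s)) + norm (integral\<^sup>L M U)"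
      by (metis norm_triangle_ineq)
    also have "norm (integral\<^sup>L M (\<lambda>s. T s - U s)) \<le> \<omega> * integral\<^sup>L M (\<lambda>s. indicator A s * norm (w s))"
    proof -
      have "norm (integral\<^sup>L M (\<lambda>s. T s - U s)) \<le> integral\<^sup>L M (\<lambda>s. norm (T s - U s))"
        by (rule integral_norm_bound)
      also have "\<dots> \<le> integral\<^sup>L M (\<lambda>s. \<omega> * (indicator A s * norm (w s)))"
      proof (intro integral_mono)
        show "integrable M (\<lambda>s. norm (T s - U s))" using Ti Ui by auto
        show "integrable M (\<lambda>s. \<omega> * (indicator A s * norm (w s)))"
          using integrable_mult_indicator[OF AO(2) integrable_norm[OF wi]] by simp
        fix s assume "s \<in> space M"
        show "norm (T s - U s) \<le> \<omega> * (indicator A s * norm (w s))"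
        proof (cases "s \<in> A")
          case True
          have "T s - U s = (G (\<xi>, s) - G (\<xi>, c)) *v w s"
            using True by (simp add: T_def U_def matrix_vector_mult_diff_rdistrib)
          then have "norm (T s - U s) \<le> norm (G (\<xi>, s) - G (\<xi>, c)) * norm (w s)"
            by (simp add: norm_mv)
          also have "\<dots> \<le> \<omega> * norm (w s)"
            using Gu[of s c] True c AO diameter_bounded_bound[OF bA True c] dA
            by (intro mult_right_mono) auto
          finally show ?thesis using True by simp
        qed (simp add: T_def U_def)
      qed
      also have "\<dots> = \<omega> * integral\<^sup>L M (\<lambda>s. indicator A s * norm (w s))" by simp
      finally show ?thesis .
    qed
    also have "norm (integral\<^sup>L M U) \<le> Mg * (mm A * norm (vv A - zz A *\<^sub>R ee A))"
    proof -
      have "integral\<^sup>L M U = G (\<xi>, c) *v integral\<^sup>L M (\<lambda>s. indicator A s *\<^sub>R w s)"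
        unfolding U_def by (rule integral_bounded_linear[OF matrix_vector_mul_bounded_linear Aw])
      also have "integral\<^sup>L M (\<lambda>s. indicator A s *\<^sub>R w s) = mm A *\<^sub>R (vv A - zz A *\<^sub>R ee A)"
        using cell_w[OF A] by (simp add: w_def)
      finally have eqU: "integral\<^sup>L M U = G (\<xi>, c) *v (mm A *\<^sub>R (vv A - zz A *\<^sub>R ee A))" .
      have "norm (integral\<^sup>L M U) \<le> norm (G (\<xi>, c)) * norm (mm A *\<^sub>R (vv A - zz A *\<^sub>R ee A))"
        unfolding eqU by (rule norm_mv)
      also have "\<dots> \<le> Mg * norm (mm A *\<^sub>R (vv A - zz A *\<^sub>R ee A))"
        using Gb[of c] c AO by (intro mult_right_mono) auto
      also have "norm (mm A *\<^sub>R (vv A - zz A *\<^sub>R ee A)) = mm A * norm (vv A - zz A *\<^sub>R ee A)"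
        using mm_nonneg[of A] by simp
      finally show ?thesis .
    qed
    finally show ?thesis by (simp add: T_def[abs_def])
  qed
  have "norm (integral\<^sup>L M (\<lambda>s. G (\<xi>, s) *v x s) - integral\<^sup>L M (\<lambda>s. G (\<xi>, s) *v xd s))
      \<le> (\<Sum>A\<in>P. norm (integral\<^sup>L M (\<lambda>s. indicator A s *\<^sub>R (G (\<xi>, s) *v w s))))"
    unfolding eq by (rule norm_sum)
  also have "\<dots> \<le> (\<Sum>A\<in>P. \<omega> * integral\<^sup>L M (\<lambda>s. indicator A s * norm (w s)) + Mg * (mm A * norm (vv A - zz A *\<^sub>R ee A)))"
    by (intro sum_mono cellb)
  also have "\<dots> = \<omega> * (\<Sum>A\<in>P. integral\<^sup>L M (\<lambda>s. indicator A s * norm (w s))) + Mg * (\<Sum>A\<in>P. mm A * norm (vv A - zz A *\<^sub>R ee A))"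
    by (simp add: sum.distrib sum_distrib_left)
  also have "(\<Sum>A\<in>P. integral\<^sup>L M (\<lambda>s. indicator A s * norm (w s))) = integral\<^sup>L M (\<lambda>s. norm (w s))"
    using part_integral[OF P integrable_norm[OF wi]] by simp
  also have "\<omega> * integral\<^sup>L M (\<lambda>s. norm (w s)) \<le> \<omega> * (2 * (mO + r powr p))"
    using w_norm_int om by (intro mult_left_mono) (auto simp: w_def)
  also have "Mg * (\<Sum>A\<in>P. mm A * norm (vv A - zz A *\<^sub>R ee A)) \<le> Mg * (mO * (dd + \<gamma> * \<sigma>) + 2 * r powr p / \<gamma> powr (p - 1))"
    using sum_err Mg by (intro mult_left_mono) auto
  finally show ?thesis by simp
qed

end

context disc begin

definition "CC \<omega> Mg = \<omega> * (2 * (mO + r powr p)) + Mg * (mO * (dd + \<gamma> * \<sigma>) + 2 * r powr p / \<gamma> powr (p - 1))"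

lemma emeasure_M_Om: "emeasure M \<Omega> = ennreal mO"
  by (simp add: emeasure_restrict_space emeasure_Om)

lemma CC_nonneg: "0 \<le> \<omega> \<Longrightarrow> 0 \<le> Mg \<Longrightarrow> 0 \<le> CC \<omega> Mg"
  unfolding CC_def using mO_nonneg dd_pos \<gamma> \<sigma> r0 by (intro add_nonneg_nonneg mult_nonneg_nonneg) auto

lemma main_est:
  fixes G :: "(real^'k) \<times> (real^'k) \<Rightarrow> real^'n^'m" and Mg \<omega> \<eta> :: real
  assumes Gc: "continuous_on UNIV G"
    and Gb: "\<And>\<xi> s. \<xi> \<in> \<Omega> \<Longrightarrow> s \<in> \<Omega> \<Longrightarrow> norm (G (\<xi>, s)) \<le> Mg" and Mg: "0 \<le> Mg"
    and Gu: "\<And>\<xi> s c. \<xi> \<in> \<Omega> \<Longrightarrow> s \<in> \<Omega> \<Longrightarrow> c \<in> \<Omega> \<Longrightarrow> dist s c \<le> \<Delta> \<Longrightarrow> norm (G (\<xi>, s) - G (\<xi>, c)) \<le> \<omega>"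
    and om: "0 \<le> \<omega>"
    and Ga: "(\<integral>\<^sup>+\<xi>. PhiL (\<lambda>z. K0 z - G z) \<xi> \<partial>M) \<le> ennreal \<eta>" and eta: "0 \<le> \<eta>"
  shows "integral\<^sup>L M (\<lambda>\<xi>. norm (intop \<Omega> K x \<xi> - intop \<Omega> K xd \<xi>) powr q)
      \<le> 2 powr q * ((2 * r) powr q * \<eta> + mO * CC \<omega> Mg powr q)"
proof -
  define L where "L z = K0 z - G z" for z
  have Gm: "G \<in> borel_measurable borel" using Gc by (rule borel_measurable_continuous_onI)
  have Lm: "L \<in> borel_measurable borel" unfolding L_def[abs_def] using Gm by measurable
  have KLG: "K0 z = L z + G z" for z by (simp add: L_def)
  have PhiM: "PhiL L \<in> borel_measurable M" by (rule PhiL_meas[OF Lm])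
  have Ga': "(\<integral>\<^sup>+\<xi>. PhiL L \<xi> \<partial>M) \<le> ennreal \<eta>" using Ga by (simp add: L_def[abs_def])
  have AE1: "AE \<xi> in M. PhiL L \<xi> \<noteq> \<infinity>"
    using Ga' by (intro nn_integral_PInf_AE[OF PhiM]) (auto simp: top_unique dest: order_trans[OF _ Ga'])
  define C where "C = CC \<omega> Mg"
  have C0: "0 \<le> C" using CC_nonneg[OF om Mg] by (simp add: C_def)
  have pt: "ennreal (norm (intop \<Omega> K x \<xi> - intop \<Omega> K xd \<xi>) powr q)
      \<le> ennreal (2 powr q * (2 * r) powr q) * PhiL L \<xi> + ennreal (2 powr q * C powr q)"
    if \<xi>: "\<xi> \<in> \<Omega>" and fin: "PhiL L \<xi> \<noteq> \<infinity>" and sec: "AE s in M. K \<xi> s = K0 (\<xi>, s)" for \<xi>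
  proof -
    have Phi: "PhiL L \<xi> < \<infinity>" using fin by (simp add: top.not_eq_extremum)
    have Gb': "\<And>s. s \<in> \<Omega> \<Longrightarrow> norm (G (\<xi>, s)) \<le> Mg" using Gb \<xi> by blast
    have Gu': "\<And>s c. s \<in> \<Omega> \<Longrightarrow> c \<in> \<Omega> \<Longrightarrow> dist s c \<le> \<Delta> \<Longrightarrow> norm (G (\<xi>, s) - G (\<xi>, c)) \<le> \<omega>"
      using Gu \<xi> by blast
    define \<phi> where "\<phi> = enn2real (PhiL L \<xi>)"
    have phi0: "0 \<le> \<phi>" by (simp add: \<phi>_def)
    have ePhi: "ennreal \<phi> = PhiL L \<xi>" using Phi by (simp add: \<phi>_def less_top)
    have split: "intop \<Omega> K y \<xi> = integral\<^sup>L M (\<lambda>s. L (\<xi>, s) *v y s) + integral\<^sup>L M (\<lambda>s. G (\<xi>, s) *v y s)"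
      if "y \<in> Bp p \<Omega> r" for y
      by (rule intop_split[OF Lm Gm Phi _ that sec KLG]) (use Gb' in auto)
    have Li: "norm (integral\<^sup>L M (\<lambda>s. L (\<xi>, s) *v y s)) \<le> enn2real (PhiL L \<xi>) powr (1/q) * r"
      if "y \<in> Bp p \<Omega> r" for y
      by (rule Lsec_int(2)[OF Lm Gm Phi _ that]) (use Gb' in auto)
    have Gi: "integrable M (\<lambda>s. G (\<xi>, s) *v y s)"
      if "y \<in> Bp p \<Omega> r" for y
      by (rule Gsec_int[OF Lm Gm Phi _ that]) (use Gb' in auto)
    define a1 where "a1 = integral\<^sup>L M (\<lambda>s. L (\<xi>, s) *v x s)"
    define a2 where "a2 = integral\<^sup>L M (\<lambda>s. L (\<xi>, s) *v xd s)"
    define a3 where "a3 = integral\<^sup>L M (\<lambda>s. G (\<xi>, s) *v x s) - integral\<^sup>L M (\<lambda>s. G (\<xi>, s) *v xd s)"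
    have eqD: "intop \<Omega> K x \<xi> - intop \<Omega> K xd \<xi> = (a1 - a2) + a3"
      unfolding a1_def a2_def a3_def split[OF x] split[OF xdB] by (simp add: algebra_simps)
    have "norm (intop \<Omega> K x \<xi> - intop \<Omega> K xd \<xi>) \<le> norm (a1 - a2) + norm a3"
      unfolding eqD by (rule norm_triangle_ineq)
    also have "norm (a1 - a2) \<le> norm a1 + norm a2" by (rule norm_triangle_ineq4)
    finally have "norm (intop \<Omega> K x \<xi> - intop \<Omega> K xd \<xi>)
        \<le> norm (integral\<^sup>L M (\<lambda>s. L (\<xi>, s) *v x s)) + norm (integral\<^sup>L M (\<lambda>s. L (\<xi>, s) *v xd s))
          + norm (integral\<^sup>L M (\<lambda>s. G (\<xi>, s) *v x s) - integral\<^sup>L M (\<lambda>s. G (\<xi>, s) *v xd s))"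
      unfolding a1_def a2_def a3_def by simp
    also have "\<dots> \<le> \<phi> powr (1/q) * r + \<phi> powr (1/q) * r + C"
    proof (intro add_mono)
      show "norm (integral\<^sup>L M (\<lambda>s. L (\<xi>, s) *v x s)) \<le> \<phi> powr (1/q) * r"
        using Li[OF x] by (simp add: \<phi>_def)
      show "norm (integral\<^sup>L M (\<lambda>s. L (\<xi>, s) *v xd s)) \<le> \<phi> powr (1/q) * r"
        using Li[OF xdB] by (simp add: \<phi>_def)
      show "norm (integral\<^sup>L M (\<lambda>s. G (\<xi>, s) *v x s) - integral\<^sup>L M (\<lambda>s. G (\<xi>, s) *v xd s)) \<le> C"
        unfolding C_def CC_def
        by (rule Gpart[OF Gm _ Mg _ om Gi[OF x] Gi[OF xdB]]) (simp_all add: Gb' Gu')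
    qed
    finally have nD: "norm (intop \<Omega> K x \<xi> - intop \<Omega> K xd \<xi>) \<le> 2 * r * \<phi> powr (1/q) + C" by simp
    have "norm (intop \<Omega> K x \<xi> - intop \<Omega> K xd \<xi>) powr q \<le> (2 * r * \<phi> powr (1/q) + C) powr q"
      using nD q1 by (intro powr_mono2) auto
    also have "\<dots> \<le> 2 powr q * ((2 * r * \<phi> powr (1/q)) powr q + C powr q)"
      using q1 r0 C0 by (intro sum_powr_le) auto
    also have "(2 * r * \<phi> powr (1/q)) powr q = (2 * r) powr q * \<phi>"
      using r0 phi0 q1 by (simp add: powr_mult powr_powr)
    finally have le: "norm (intop \<Omega> K x \<xi> - intop \<Omega> K xd \<xi>) powr q \<le> 2 powr q * (2 * r) powr q * \<phi> + 2 powr q * C powr q"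
      by (simp add: algebra_simps)
    have "ennreal (norm (intop \<Omega> K x \<xi> - intop \<Omega> K xd \<xi>) powr q) \<le> ennreal (2 powr q * (2 * r) powr q * \<phi> + 2 powr q * C powr q)"
      using le by (rule ennreal_leI)
    also have "\<dots> = ennreal (2 powr q * (2 * r) powr q) * ennreal \<phi> + ennreal (2 powr q * C powr q)"
      using phi0 r0 by (simp add: ennreal_plus[symmetric] ennreal_mult[symmetric] del: ennreal_plus)
    finally show ?thesis using ePhi by simp
  qed
  have "(\<integral>\<^sup>+\<xi>. ennreal (norm (intop \<Omega> K x \<xi> - intop \<Omega> K xd \<xi>) powr q) \<partial>M)
      \<le> (\<integral>\<^sup>+\<xi>. ennreal (2 powr q * (2 * r) powr q) * PhiL L \<xi> + ennreal (2 powr q * C powr q) \<partial>M)"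
  proof (intro nn_integral_mono_AE)
    show "AE \<xi> in M. ennreal (norm (intop \<Omega> K x \<xi> - intop \<Omega> K xd \<xi>) powr q)
      \<le> ennreal (2 powr q * (2 * r) powr q) * PhiL L \<xi> + ennreal (2 powr q * C powr q)"
      using AE1 K0_sections AE_space[of M]
    proof eventually_elim
      case (elim \<xi>)
      show ?case by (rule pt) (use elim in auto)
    qed
  qed
  also have "\<dots> = ennreal (2 powr q * (2 * r) powr q) * (\<integral>\<^sup>+\<xi>. PhiL L \<xi> \<partial>M) + ennreal (2 powr q * C powr q) * ennreal mO"
    using PhiM by (subst nn_integral_add) (auto simp: nn_integral_cmult emeasure_M_Om)
  also have "\<dots> \<le> ennreal (2 powr q * (2 * r) powr q) * ennreal \<eta> + ennreal (2 powr q * C powr q) * ennreal mO"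
    by (intro add_mono mult_left_mono Ga') auto
  also have "\<dots> = ennreal (2 powr q * ((2 * r) powr q * \<eta> + mO * C powr q))"
    using eta mO_nonneg by (simp add: ennreal_plus[symmetric] ennreal_mult[symmetric] algebra_simps del: ennreal_plus)
  finally have "(\<integral>\<^sup>+\<xi>. ennreal (norm (intop \<Omega> K x \<xi> - intop \<Omega> K xd \<xi>) powr q) \<partial>M) \<le> ennreal (2 powr q * ((2 * r) powr q * \<eta> + mO * C powr q))" .
  then show ?thesis unfolding C_def
    using eta mO_nonneg by (intro integral_le_of_nn) auto
qed

end

context setting begin

lemma G_choice:
  assumes eta: "\<eta> > 0"
  shows "\<exists>G Mg. continuous_on UNIV G \<and> Mg > 0 \<and> (\<forall>\<xi>\<in>\<Omega>. \<forall>s\<in>\<Omega>. norm (G (\<xi>, s)) \<le> Mg)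
     \<and> (\<integral>\<^sup>+\<xi>. PhiL (\<lambda>z. K0 z - G z) \<xi> \<partial>M) \<le> ennreal \<eta>"
proof -
  obtain G where Gc: "continuous_on UNIV G"
    and Gi: "(\<integral>\<^sup>+z. ennreal (indicator (\<Omega>\<times>\<Omega>) z * norm (Kp z - G z) powr q) \<partial>lebesgue) \<le> ennreal \<eta>"
    using density[OF eta] by blast
  have "compact (G ` (\<Omega> \<times> \<Omega>))"
    using cpt Gc by (intro compact_continuous_image) (auto intro: continuous_on_subset compact_Times)
  then obtain Mg where Mg: "Mg > 0" "\<forall>v\<in>G ` (\<Omega> \<times> \<Omega>). norm v \<le> Mg"
    using compact_imp_bounded bounded_pos by metis
  have "(\<integral>\<^sup>+\<xi>. PhiL (\<lambda>z. K0 z - G z) \<xi> \<partial>M) \<le> ennreal \<eta>"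
    using Gi transfer[OF borel_measurable_continuous_onI[OF Gc]] by simp
  then show ?thesis using Gc Mg by blast
qed

lemma unif_G:
  assumes Gc: "continuous_on UNIV G" and om: "\<omega> > 0"
  shows "\<exists>d>0. \<forall>\<xi> s c. \<xi> \<in> \<Omega> \<longrightarrow> s \<in> \<Omega> \<longrightarrow> c \<in> \<Omega> \<longrightarrow> dist s c < d \<longrightarrow> norm (G (\<xi>, s) - G (\<xi>, c)) \<le> \<omega>"
proof -
  have "uniformly_continuous_on (\<Omega> \<times> \<Omega>) G"
    using Gc cpt by (intro compact_uniformly_continuous) (auto intro: continuous_on_subset compact_Times)
  then obtain d where d: "d > 0" "\<And>z z'. z \<in> \<Omega>\<times>\<Omega> \<Longrightarrow> z' \<in> \<Omega>\<times>\<Omega> \<Longrightarrow> dist z' z < d \<Longrightarrow> dist (G z') (G z) < \<omega>"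
    using om unfolding uniformly_continuous_on_def by metis
  have "norm (G (\<xi>, s) - G (\<xi>, c)) \<le> \<omega>" if "\<xi> \<in> \<Omega>" "s \<in> \<Omega>" "c \<in> \<Omega>" "dist s c < d" for \<xi> s c
  proof -
    have "dist (\<xi>, s) (\<xi>, c) = dist s c" by (simp add: dist_Pair_Pair)
    then have "dist (G (\<xi>, s)) (G (\<xi>, c)) < \<omega>" using d(2)[of "(\<xi>, c)" "(\<xi>, s)"] that by auto
    then show ?thesis by (simp add: dist_norm)
  qed
  then show ?thesis using d(1) by blast
qed

end

context setting begin

lemma approx:
  assumes eps: "\<epsilon> > 0"
  shows "\<exists>\<gamma>s>0. \<exists>\<Delta>s>0. \<exists>\<delta>s>0. \<exists>\<sigma>s>0. \<forall>\<Delta> P a \<sigma> (Es :: (real^'n) set) x.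
     0 < \<Delta> \<and> \<Delta> < \<Delta>s \<and> is_Delta_partition \<Omega> \<Delta> P \<and> a \<ge> 1 \<and> 0 < \<gamma>s / real a \<and> \<gamma>s / real a < \<delta>s
     \<and> 0 < \<sigma> \<and> \<sigma> < \<sigma>s \<and> is_finite_net \<sigma> (sphere 0 1) Es \<and> x \<in> Bp p \<Omega> r
     \<longrightarrow> (\<exists>y\<in>Bp_disc p r P (unif_grid \<gamma>s a) Es. Lp_norm q \<Omega> (\<lambda>s. intop \<Omega> K x s - intop \<Omega> K y s) \<le> \<epsilon>)"
proof -
  define T where "T = \<epsilon> powr q"
  have T: "T > 0" using eps by (simp add: T_def)
  define \<eta> where "\<eta> = T / (2 * 2 powr q * (2*r) powr q)"
  have eta: "\<eta> > 0" using T r0 by (simp add: \<eta>_def)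
  obtain G Mg where Gc: "continuous_on UNIV G" and Mg: "Mg > 0"
    and Gb: "\<forall>\<xi>\<in>\<Omega>. \<forall>s\<in>\<Omega>. norm (G (\<xi>, s)) \<le> Mg"
    and Ga: "(\<integral>\<^sup>+\<xi>. PhiL (\<lambda>z. K0 z - G z) \<xi> \<partial>M) \<le> ennreal \<eta>"
    using G_choice[OF eta] by blast
  define c0 where "c0 = (T / (2 * 2 powr q * (mO + 1))) powr (1/q)"
  have c0: "c0 > 0" using T mO_nonneg by (simp add: c0_def)
  have c0q: "c0 powr q = T / (2 * 2 powr q * (mO + 1))"
    unfolding c0_def using T mO_nonneg q1 by (simp add: powr_powr)
  define \<omega> where "\<omega> = c0 / (8 * (mO + r powr p) + 1)"
  have den: "0 < 8 * (mO + r powr p) + 1" using mO_nonneg powr_ge_zero[of r p] by (intro add_nonneg_pos mult_nonneg_nonneg add_nonneg_nonneg) auto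
  have om: "\<omega> > 0" using c0 den unfolding \<omega>_def by (intro divide_pos_pos)
  obtain d where d: "d > 0" and Gu: "\<And>\<xi> s c. \<xi> \<in> \<Omega> \<Longrightarrow> s \<in> \<Omega> \<Longrightarrow> c \<in> \<Omega> \<Longrightarrow> dist s c < d \<Longrightarrow> norm (G (\<xi>, s) - G (\<xi>, c)) \<le> \<omega>"
    using unif_G[OF Gc om] by blast
  define \<gamma> where "\<gamma> = (8 * Mg * r powr p / c0 + 1) powr (1/(p-1))"
  have pos8: "0 < 8 * Mg * r powr p / c0 + 1"
    using Mg c0 by (intro add_nonneg_pos divide_nonneg_pos mult_nonneg_nonneg) auto
  have gam: "\<gamma> > 0" using pos8 by (simp add: \<gamma>_def)
  have gam_pow: "\<gamma> powr (p - 1) = 8 * Mg * r powr p / c0 + 1"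
    unfolding \<gamma>_def using pos8 p1 by (simp add: powr_powr)
  define \<delta>s where "\<delta>s = c0 / (4 * (Mg * mO + 1))"
  have ds: "\<delta>s > 0" using c0 Mg mO_nonneg unfolding \<delta>s_def
    by (intro divide_pos_pos mult_pos_pos add_nonneg_pos mult_nonneg_nonneg) auto
  define \<sigma>s where "\<sigma>s = c0 / (4 * (Mg * mO * \<gamma> + 1))"
  have ss: "\<sigma>s > 0" using c0 Mg mO_nonneg gam unfolding \<sigma>s_def
    by (intro divide_pos_pos mult_pos_pos add_nonneg_pos mult_nonneg_nonneg) auto
  have main: "\<exists>y\<in>Bp_disc p r P (unif_grid \<gamma> a) Es. Lp_norm q \<Omega> (\<lambda>s. intop \<Omega> K x s - intop \<Omega> K y s) \<le> \<epsilon>"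
    if H: "0 < \<Delta>" "\<Delta> < d" "is_Delta_partition \<Omega> \<Delta> P" "a \<ge> 1" "0 < \<gamma> / real a" "\<gamma> / real a < \<delta>s"
      "0 < \<sigma>" "\<sigma> < \<sigma>s" "is_finite_net \<sigma> (sphere 0 1) Es" "x \<in> Bp p \<Omega> r"
    for \<Delta> P a \<sigma> and Es :: "(real^'n) set" and x
  proof -
    interpret D: disc \<Omega> K p q r x P \<Delta> \<gamma> a \<sigma> Es
      by unfold_locales (use H gam in auto)
    have Gu': "\<And>\<xi> s c. \<xi> \<in> \<Omega> \<Longrightarrow> s \<in> \<Omega> \<Longrightarrow> c \<in> \<Omega> \<Longrightarrow> dist s c \<le> \<Delta> \<Longrightarrow> norm (G (\<xi>, s) - G (\<xi>, c)) \<le> \<omega>"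
      using Gu H(2) by force
    have est: "integral\<^sup>L M (\<lambda>\<xi>. norm (intop \<Omega> K x \<xi> - intop \<Omega> K D.xd \<xi>) powr q)
      \<le> 2 powr q * ((2 * r) powr q * \<eta> + mO * D.CC \<omega> Mg powr q)"
      by (rule D.main_est[OF Gc _ _ Gu' _ Ga]) (use Gb Mg om eta in auto)
    have CC: "D.CC \<omega> Mg \<le> c0"
    proof -
      have t1: "\<omega> * (2 * (mO + r powr p)) \<le> c0 / 4"
      proof -
        have "\<omega> * (2 * (mO + r powr p)) = c0 * (2 * (mO + r powr p)) / (8 * (mO + r powr p) + 1)"
          by (simp add: \<omega>_def)
        also have "\<dots> \<le> c0 / 4"
          using c0 mO_nonneg by (simp add: divide_le_eq field_simps add_pos_nonneg)
        finally show ?thesis .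
      qed
      have dd: "D.dd < \<delta>s" using H(6) by (simp add: D.dd_def)
      have t2: "Mg * (mO * D.dd) \<le> c0 / 4"
      proof -
        have "Mg * (mO * D.dd) \<le> Mg * (mO * \<delta>s)"
          using dd Mg mO_nonneg by (intro mult_left_mono) auto
        also have "\<dots> = c0 * (Mg * mO) / (4 * (Mg * mO + 1))" by (simp add: \<delta>s_def)
        also have "\<dots> \<le> c0 / 4" using c0 Mg mO_nonneg by (simp add: divide_le_eq field_simps add_pos_nonneg)
        finally show ?thesis .
      qed
      have t3: "Mg * (mO * (\<gamma> * \<sigma>)) \<le> c0 / 4"
      proof -
        have "Mg * (mO * (\<gamma> * \<sigma>)) \<le> Mg * (mO * (\<gamma> * \<sigma>s))"
          using H(8) Mg mO_nonneg gam by (intro mult_left_mono) auto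
        also have "\<dots> = c0 * (Mg * mO * \<gamma>) / (4 * (Mg * mO * \<gamma> + 1))" by (simp add: \<sigma>s_def)
        also have "\<dots> \<le> c0 / 4" using c0 Mg mO_nonneg gam by (simp add: divide_le_eq field_simps add_pos_nonneg)
        finally show ?thesis .
      qed
      have t4: "Mg * (2 * r powr p / \<gamma> powr (p - 1)) \<le> c0 / 4"
      proof -
        have pos: "\<gamma> powr (p - 1) > 0" using gam by simp
        have "Mg * (2 * r powr p) * 4 \<le> c0 * (8 * Mg * r powr p / c0 + 1)"
          using c0 Mg r0 by (simp add: field_simps)
        then have "Mg * (2 * r powr p) * 4 \<le> c0 * \<gamma> powr (p - 1)" by (simp add: gam_pow)
        then show ?thesis using pos by (simp add: field_simps)
      qed
      have "D.CC \<omega> Mg = \<omega> * (2 * (mO + r powr p)) + Mg * (mO * D.dd) + Mg * (mO * (\<gamma> * \<sigma>)) + Mg * (2 * r powr p / \<gamma> powr (p - 1))"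
        by (simp add: D.CC_def algebra_simps)
      also have "\<dots> \<le> c0" using t1 t2 t3 t4 by linarith
      finally show ?thesis .
    qed
    have CC0: "0 \<le> D.CC \<omega> Mg" using D.CC_nonneg om Mg by simp
    have "2 powr q * ((2 * r) powr q * \<eta> + mO * D.CC \<omega> Mg powr q) \<le> 2 powr q * ((2 * r) powr q * \<eta> + mO * c0 powr q)"
      using CC CC0 q1 mO_nonneg by (intro mult_left_mono add_left_mono powr_mono2) auto
    also have "\<dots> = T / 2 + T * mO / (2 * (mO + 1))"
    proof -
      have m1: "mO + 1 > 0" using mO_nonneg by linarith
      have rq: "(2 * r) powr q > 0" using r0 by simp
      have e1: "2 powr q * ((2 * r) powr q * \<eta>) = T / 2" using rq by (simp add: \<eta>_def)
      have e2: "2 powr q * (mO * c0 powr q) = T * mO / (2 * (mO + 1))"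
        using m1 by (simp add: c0q)
      show ?thesis by (simp only: distrib_left e1 e2)
    qed
    also have "\<dots> \<le> T"
    proof -
      have "T * mO / (2 * (mO + 1)) \<le> T / 2" using T mO_nonneg by (simp add: divide_le_eq field_simps)
      then show ?thesis by linarith
    qed
    finally have I: "integral\<^sup>L M (\<lambda>\<xi>. norm (intop \<Omega> K x \<xi> - intop \<Omega> K D.xd \<xi>) powr q) \<le> T"
      using est by linarith
    have I0: "0 \<le> integral\<^sup>L M (\<lambda>\<xi>. norm (intop \<Omega> K x \<xi> - intop \<Omega> K D.xd \<xi>) powr q)"
      by (intro integral_nonneg_AE) auto
    have "Lp_norm q \<Omega> (\<lambda>s. intop \<Omega> K x s - intop \<Omega> K D.xd s) \<le> T powr (1/q)"
      unfolding Lp_norm_def using I I0 q1 by (intro powr_mono2) auto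
    also have "T powr (1/q) = \<epsilon>" using eps q1 by (simp add: T_def powr_powr)
    finally show ?thesis using D.xd_disc by blast
  qed
  show ?thesis
    apply (rule exI[of _ \<gamma>], intro conjI gam)
    apply (rule exI[of _ d], intro conjI d)
    apply (rule exI[of _ \<delta>s], intro conjI ds)
    apply (rule exI[of _ \<sigma>s], intro conjI ss)
    using main by blast
qed

end

theorem corollary1:
  fixes \<Omega> :: "(real^'k) set"
    and K :: "real^'k \<Rightarrow> real^'k \<Rightarrow> real^'n^'m"
    and p q r :: real
  assumes "compact \<Omega>"
    and "p > 1" and "1 / p + 1 / q = 1" and "r > 0"
    and "(\<lambda>(\<xi>, s). K \<xi> s) \<in> borel_measurable (lebesgue_on (\<Omega> \<times> \<Omega>))"
    and "integrable (lebesgue_on (\<Omega> \<times> \<Omega>)) (\<lambda>(\<xi>, s). norm (K \<xi> s) powr q)"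
  shows "\<forall>\<epsilon>>0. \<exists>\<gamma>s>0. \<exists>\<Delta>s>0. \<exists>\<delta>s>0. \<exists>\<sigma>s>0.
     \<forall>\<Delta> P a \<sigma> (Es :: (real^'n) set).
        0 < \<Delta> \<and> \<Delta> < \<Delta>s \<and> is_Delta_partition \<Omega> \<Delta> P
        \<and> a \<ge> 1 \<and> 0 < \<gamma>s / real a \<and> \<gamma>s / real a < \<delta>s
        \<and> 0 < \<sigma> \<and> \<sigma> < \<sigma>s \<and> is_finite_net \<sigma> (sphere 0 1) Es
      \<longrightarrow> hausdorff_Lq q \<Omega> (intop \<Omega> K ` Bp p \<Omega> r)
            (intop \<Omega> K ` Bp_disc p r P (unif_grid \<gamma>s a) Es) \<le> ereal \<epsilon>"
proof (intro allI impI)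
  interpret S: setting \<Omega> K p q r using assms by unfold_locales auto
  fix \<epsilon> :: real assume eps: "\<epsilon> > 0"
  obtain \<gamma>s \<Delta>s \<delta>s \<sigma>s where pos: "\<gamma>s > 0" "\<Delta>s > 0" "\<delta>s > 0" "\<sigma>s > 0"
    and ap: "\<And>\<Delta> P a \<sigma> (Es :: (real^'n) set) x.
     0 < \<Delta> \<and> \<Delta> < \<Delta>s \<and> is_Delta_partition \<Omega> \<Delta> P \<and> a \<ge> 1 \<and> 0 < \<gamma>s / real a \<and> \<gamma>s / real a < \<delta>s
     \<and> 0 < \<sigma> \<and> \<sigma> < \<sigma>s \<and> is_finite_net \<sigma> (sphere 0 1) Es \<and> x \<in> Bp p \<Omega> r
     \<Longrightarrow> (\<exists>y\<in>Bp_disc p r P (unif_grid \<gamma>s a) Es. Lp_norm q \<Omega> (\<lambda>s. intop \<Omega> K x s - intop \<Omega> K y s) \<le> \<epsilon>)"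
    using S.approx[OF eps] by blast
  have main: "hausdorff_Lq q \<Omega> (intop \<Omega> K ` Bp p \<Omega> r)
            (intop \<Omega> K ` Bp_disc p r P (unif_grid \<gamma>s a) Es) \<le> ereal \<epsilon>"
    if H: "0 < \<Delta> \<and> \<Delta> < \<Delta>s \<and> is_Delta_partition \<Omega> \<Delta> P
        \<and> a \<ge> 1 \<and> 0 < \<gamma>s / real a \<and> \<gamma>s / real a < \<delta>s
        \<and> 0 < \<sigma> \<and> \<sigma> < \<sigma>s \<and> is_finite_net \<sigma> (sphere 0 1) Es"
    for \<Delta> P a \<sigma> and Es :: "(real^'n) set"
  proof -
    let ?U = "intop \<Omega> K ` Bp p \<Omega> r"
    let ?V = "intop \<Omega> K ` Bp_disc p r P (unif_grid \<gamma>s a) Es"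
    have part: "is_Delta_partition \<Omega> \<Delta> P" using H by blast
    have grid: "unif_grid \<gamma>s a \<subseteq> {0..}" using pos by (auto simp: unif_grid_def)
    have sph: "Es \<subseteq> sphere 0 1" using H by (simp add: is_finite_net_def)
    have A: "(SUP u\<in>?U. INF v\<in>?V. ereal (Lp_norm q \<Omega> (\<lambda>s. u s - v s))) \<le> ereal \<epsilon>"
    proof (rule SUP_least)
      fix u assume "u \<in> ?U"
      then obtain x where x: "x \<in> Bp p \<Omega> r" and u: "u = intop \<Omega> K x" by blast
      obtain y where y: "y \<in> Bp_disc p r P (unif_grid \<gamma>s a) Es"
        and le: "Lp_norm q \<Omega> (\<lambda>s. intop \<Omega> K x s - intop \<Omega> K y s) \<le> \<epsilon>"
        using ap[of \<Delta> P a \<sigma> Es x] H x by blast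
      have "(INF v\<in>?V. ereal (Lp_norm q \<Omega> (\<lambda>s. u s - v s))) \<le> ereal (Lp_norm q \<Omega> (\<lambda>s. u s - intop \<Omega> K y s))"
        using y by (intro INF_lower) auto
      also have "\<dots> \<le> ereal \<epsilon>" using le u by simp
      finally show "(INF v\<in>?V. ereal (Lp_norm q \<Omega> (\<lambda>s. u s - v s))) \<le> ereal \<epsilon>" .
    qed
    have B: "(SUP v\<in>?V. INF u\<in>?U. ereal (Lp_norm q \<Omega> (\<lambda>s. u s - v s))) \<le> ereal \<epsilon>"
    proof (rule SUP_least)
      fix v assume "v \<in> ?V"
      then obtain y where y: "y \<in> Bp_disc p r P (unif_grid \<gamma>s a) Es" and v: "v = intop \<Omega> K y" by blast
      have yB: "y \<in> Bp p \<Omega> r" by (rule S.Bp_disc_sub[OF part grid sph y])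
      have "(INF u\<in>?U. ereal (Lp_norm q \<Omega> (\<lambda>s. u s - v s))) \<le> ereal (Lp_norm q \<Omega> (\<lambda>s. v s - v s))"
        using yB v by (intro INF_lower) auto
      also have "Lp_norm q \<Omega> (\<lambda>s. v s - v s) = 0"
        using S.q1 by (simp add: Lp_norm_def)
      finally show "(INF u\<in>?U. ereal (Lp_norm q \<Omega> (\<lambda>s. u s - v s))) \<le> ereal \<epsilon>"
        using eps by (simp add: order_trans)
    qed
    show "hausdorff_Lq q \<Omega> ?U ?V \<le> ereal \<epsilon>"
      unfolding hausdorff_Lq_def using A B by simp
  qed
  show "\<exists>\<gamma>s>0. \<exists>\<Delta>s>0. \<exists>\<delta>s>0. \<exists>\<sigma>s>0.
     \<forall>\<Delta> P a \<sigma> (Es :: (real^'n) set).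
        0 < \<Delta> \<and> \<Delta> < \<Delta>s \<and> is_Delta_partition \<Omega> \<Delta> P
        \<and> a \<ge> 1 \<and> 0 < \<gamma>s / real a \<and> \<gamma>s / real a < \<delta>s
        \<and> 0 < \<sigma> \<and> \<sigma> < \<sigma>s \<and> is_finite_net \<sigma> (sphere 0 1) Es
      \<longrightarrow> hausdorff_Lq q \<Omega> (intop \<Omega> K ` Bp p \<Omega> r)
            (intop \<Omega> K ` Bp_disc p r P (unif_grid \<gamma>s a) Es) \<le> ereal \<epsilon>"
    using pos main by blast
qed

end
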